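(* Let $\Gamma_1,\Gamma_2,H$ be finitely generated groups with $H$ amenable, and let $\phi_1:H\to\Gamma_1$, $\phi_2:H\to\Gamma_2$ be injective homomorphisms whose images are proper subgroups. Then the amalgamated free product $\Gamma_1*_H\Gamma_2=\langle\Gamma_1,\Gamma_2\mid\phi_1(h)=\phi_2(h)\ \forall h\in H\rangle$ is extraterrestrial.
   Context: A finitely generated group is extraterrestrial if its Cayley graph with respect to some (equivalently any) finite symmetric generating set is extraterrestrial, where a graph $G=(V,E)$ is extraterrestrial if for every $m$ there is $k$ such that for every $r$ there is a triple $(U,F,O)$ of pairwise disjoint finite vertex sets with $U\neq\emptyset$, $|U|\ge m|F|$, a bijection $\mu:U\to O$ with $d_G(u,\mu(u))\le k$, and every path from $U$ to $O$ either contains a vertex of $F$ or has length at least $r$. *)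

theory Defs
  imports "HOL-Algebra.Algebra" "HOL-Library.Extended_Nat"
begin

definition walk :: "('v \<Rightarrow> 'v \<Rightarrow> bool) \<Rightarrow> 'v list \<Rightarrow> bool" where
  "walk adj xs \<longleftrightarrow> xs \<noteq> [] \<and> (\<forall>i. Suc i < length xs \<longrightarrow> adj (xs ! i) (xs ! Suc i))"

definition walk_length :: "'v list \<Rightarrow> nat" where
  "walk_length xs = length xs - 1"

text \<open>Graph distance (infinite if there is no walk).\<close>
definition gdist :: "('v \<Rightarrow> 'v \<Rightarrow> bool) \<Rightarrow> 'v \<Rightarrow> 'v \<Rightarrow> enat" where
  "gdist adj u v = Inf {enat (walk_length xs) | xs. walk adj xs \<and> hd xs = u \<and> last xs = v}"

definition extraterrestrial_graph :: "'v set \<Rightarrow> ('v \<Rightarrow> 'v \<Rightarrow> bool) \<Rightarrow> bool" where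
  "extraterrestrial_graph V adj \<longleftrightarrow>
    (\<forall>m::nat. \<exists>k::nat. \<forall>r::nat. \<exists>U F Ou (\<mu> :: 'v \<Rightarrow> 'v).
       U \<subseteq> V \<and> F \<subseteq> V \<and> Ou \<subseteq> V \<and> finite U \<and> finite F \<and> finite Ou \<and>
       U \<inter> F = {} \<and> U \<inter> Ou = {} \<and> F \<inter> Ou = {} \<and>
       U \<noteq> {} \<and> card U \<ge> m * card F \<and>
       bij_betw \<mu> U Ou \<and> (\<forall>u\<in>U. gdist adj u (\<mu> u) \<le> enat k) \<and>
       (\<forall>xs. walk adj xs \<and> hd xs \<in> U \<and> last xs \<in> Ou \<longrightarrow>
              (\<exists>x\<in>set xs. x \<in> F) \<or> walk_length xs \<ge> r))"

definition finitely_generated :: "('a, 'b) monoid_scheme \<Rightarrow> bool" where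
  "finitely_generated G \<longleftrightarrow>
     (\<exists>S. finite S \<and> S \<subseteq> carrier G \<and> generate G S = carrier G)"

definition cayley_adj :: "('a, 'b) monoid_scheme \<Rightarrow> 'a set \<Rightarrow> 'a \<Rightarrow> 'a \<Rightarrow> bool" where
  "cayley_adj G S g h \<longleftrightarrow> g \<in> carrier G \<and> h \<in> carrier G \<and> (\<exists>s\<in>S. h = g \<otimes>\<^bsub>G\<^esub> s)"

definition extraterrestrial_group :: "('a, 'b) monoid_scheme \<Rightarrow> bool" where
  "extraterrestrial_group G \<longleftrightarrow>
     (\<exists>S. finite S \<and> S \<subseteq> carrier G \<and> (\<forall>s\<in>S. inv\<^bsub>G\<^esub> s \<in> S) \<and>
          generate G S = carrier G \<and>
          extraterrestrial_graph (carrier G) (cayley_adj G S))"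

definition amenable :: "('a, 'b) monoid_scheme \<Rightarrow> bool" where
  "amenable G \<longleftrightarrow>
     (\<exists>\<mu> :: 'a set \<Rightarrow> real.
        (\<forall>A. A \<subseteq> carrier G \<longrightarrow> \<mu> A \<ge> 0) \<and> \<mu> (carrier G) = 1 \<and>
        (\<forall>A B. A \<subseteq> carrier G \<and> B \<subseteq> carrier G \<and> A \<inter> B = {} \<longrightarrow> \<mu> (A \<union> B) = \<mu> A + \<mu> B) \<and>
        (\<forall>g\<in>carrier G. \<forall>A. A \<subseteq> carrier G \<longrightarrow> \<mu> (g <#\<^bsub>G\<^esub> A) = \<mu> A))"

text \<open>G is generated by the images of
  i1, i2, and the universal property is required for all target groups whose carrier
  consists of natural numbers; since G is then countable, this is equivalent to the full
  universal property (every pair of compatible maps factors through the countable subgroup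
  generated by their images).\<close>
definition is_amalgamated_product ::
  "('g, 'x) monoid_scheme \<Rightarrow> ('a, 'y) monoid_scheme \<Rightarrow> ('b, 'z) monoid_scheme \<Rightarrow>
   ('h, 'w) monoid_scheme \<Rightarrow> ('h \<Rightarrow> 'a) \<Rightarrow> ('h \<Rightarrow> 'b) \<Rightarrow> ('a \<Rightarrow> 'g) \<Rightarrow> ('b \<Rightarrow> 'g) \<Rightarrow> bool" where
  "is_amalgamated_product G G1 G2 H \<phi>1 \<phi>2 i1 i2 \<longleftrightarrow>
     group G \<and> i1 \<in> hom G1 G \<and> i2 \<in> hom G2 G \<and>
     (\<forall>h\<in>carrier H. i1 (\<phi>1 h) = i2 (\<phi>2 h)) \<and>
     generate G (i1 ` carrier G1 \<union> i2 ` carrier G2) = carrier G \<and>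
     (\<forall>(K :: nat monoid) f1 f2.
        group K \<and> f1 \<in> hom G1 K \<and> f2 \<in> hom G2 K \<and>
        (\<forall>h\<in>carrier H. f1 (\<phi>1 h) = f2 (\<phi>2 h)) \<longrightarrow>
        (\<exists>f \<in> hom G K. (\<forall>x\<in>carrier G1. f (i1 x) = f1 x) \<and> (\<forall>x\<in>carrier G2. f (i2 x) = f2 x)))"

end

theory Submission
  imports Defs "HOL-Library.Countable_Set"
begin


lemma hall_finite:
  assumes "finite L" "\<forall>v\<in>L. finite (N v)" "\<forall>Q\<subseteq>L. card Q \<le> card (\<Union>(N ` Q))"
  shows "\<exists>f. inj_on f L \<and> (\<forall>v\<in>L. f v \<in> N v)"
  using assms
proof (induction "card L" arbitrary: L N rule: less_induct)
  case less
  show ?case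
  proof (cases "L = {}")
    case True thus ?thesis by auto
  next
    case Lne: False
    show ?thesis
    proof (cases "\<exists>Q. Q \<subseteq> L \<and> Q \<noteq> {} \<and> Q \<noteq> L \<and> card (\<Union>(N ` Q)) = card Q")
      case True
      then obtain Q where Q: "Q \<subseteq> L" "Q \<noteq> {}" "Q \<noteq> L" "card (\<Union>(N ` Q)) = card Q" by blast
      have finQ: "finite Q" using Q(1) less.prems(1) finite_subset by blast
      have cX: "card Q < card L" using Q less.prems(1) by (meson psubsetI psubset_card_mono)
      have "\<exists>f. inj_on f Q \<and> (\<forall>v\<in>Q. f v \<in> N v)"
        by (rule less.hyps[OF cX finQ]) (use less.prems Q(1) in auto)
      then obtain f1 where f1: "inj_on f1 Q" "\<forall>v\<in>Q. f1 v \<in> N v" by blast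
      define NX where "NX = \<Union>(N ` Q)"
      have finNX: "finite NX" unfolding NX_def using finQ Q(1) less.prems(2) by auto
      define L' where "L' = L - Q"
      define N' where "N' = (\<lambda>v. N v - NX)"
      have cL': "card L' < card L" unfolding L'_def using Q less.prems(1)
        using card_Diff_subset[OF finQ Q(1)] card_gt_0_iff[of Q] finQ Q(2) card_mono[OF less.prems(1) Q(1)] by linarith
      have hall': "\<forall>Y\<subseteq>L'. card Y \<le> card (\<Union>(N' ` Y))"
      proof (intro allI impI)
        fix Y assume Y: "Y \<subseteq> L'"
        have finY: "finite Y" using Y less.prems(1) unfolding L'_def using finite_subset by blast
        have disj: "Y \<inter> Q = {}" using Y unfolding L'_def by auto
        have "Y \<union> Q \<subseteq> L" using Y Q(1) unfolding L'_def by auto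
        hence "card (Y \<union> Q) \<le> card (\<Union>(N ` (Y \<union> Q)))" using less.prems(3) by blast
        moreover have "card (Y \<union> Q) = card Y + card Q" using disj finQ finY card_Un_disjoint by blast
        moreover have "\<Union>(N ` (Y \<union> Q)) = \<Union>(N' ` Y) \<union> NX" unfolding N'_def NX_def by auto
        moreover have "finite (\<Union>(N' ` Y))" unfolding N'_def using finY Y less.prems(2) unfolding L'_def by auto
        moreover have "\<Union>(N' ` Y) \<inter> NX = {}" unfolding N'_def by auto
        ultimately have "card Y + card Q \<le> card (\<Union>(N' ` Y)) + card NX"
          by (simp add: card_Un_disjoint finNX)
        thus "card Y \<le> card (\<Union>(N' ` Y))" using Q(4) unfolding NX_def by simp
      qed
      have finL': "finite L'" unfolding L'_def using less.prems(1) by auto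
      have "\<exists>f. inj_on f L' \<and> (\<forall>v\<in>L'. f v \<in> N' v)"
        by (rule less.hyps[OF cL' finL']) (use hall' less.prems(2) in \<open>auto simp: L'_def N'_def\<close>)
      then obtain f2 where f2: "inj_on f2 L'" "\<forall>v\<in>L'. f2 v \<in> N' v" by blast
      define f where "f = (\<lambda>v. if v \<in> Q then f1 v else f2 v)"
      have "inj_on f L"
      proof (rule inj_onI)
        fix u v assume uv: "u \<in> L" "v \<in> L" "f u = f v"
        show "u = v"
        proof (cases "u \<in> Q"; cases "v \<in> Q")
          assume "u \<in> Q" "v \<in> Q" thus ?thesis using uv f1(1) unfolding f_def by (auto dest: inj_onD)
        next
          assume a: "u \<in> Q" "v \<notin> Q"
          hence "f u \<in> NX" using f1(2) unfolding f_def NX_def by auto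
          moreover have "v \<in> L'" using a uv unfolding L'_def by auto
          hence "f v \<notin> NX" using a f2(2) unfolding f_def N'_def by auto
          ultimately show ?thesis using uv by auto
        next
          assume a: "u \<notin> Q" "v \<in> Q"
          hence "f v \<in> NX" using f1(2) unfolding f_def NX_def by auto
          moreover have "u \<in> L'" using a uv unfolding L'_def by auto
          hence "f u \<notin> NX" using a f2(2) unfolding f_def N'_def by auto
          ultimately show ?thesis using uv by auto
        next
          assume "u \<notin> Q" "v \<notin> Q" thus ?thesis using uv f2(1) unfolding f_def L'_def by (auto dest: inj_onD)
        qed
      qed
      moreover have "\<forall>v\<in>L. f v \<in> N v" using f1(2) f2(2) unfolding f_def L'_def N'_def by auto
      ultimately show ?thesis by blast
    next
      case False
      have strict: "card Q < card (\<Union>(N ` Q))" if "Q \<subseteq> L" "Q \<noteq> {}" "Q \<noteq> L" for Q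
      proof -
        have "card Q \<le> card (\<Union>(N ` Q))" using less.prems(3) that(1) by blast
        moreover have "card (\<Union>(N ` Q)) \<noteq> card Q" using False that by blast
        ultimately show ?thesis by linarith
      qed
      obtain v where v: "v \<in> L" using Lne by auto
      have "card {v} \<le> card (\<Union>(N ` {v}))" using less.prems(3) v by blast
      hence "N v \<noteq> {}" by auto
      then obtain y where y: "y \<in> N v" by auto
      define L' where "L' = L - {v}"
      define N' where "N' = (\<lambda>u. N u - {y})"
      have cL': "card L' < card L" unfolding L'_def using v less.prems(1)
        by (simp add: card_gt_0_iff Lne)
      have hall': "\<forall>Y\<subseteq>L'. card Y \<le> card (\<Union>(N' ` Y))"
      proof (intro allI impI)
        fix Y assume Y: "Y \<subseteq> L'"
        show "card Y \<le> card (\<Union>(N' ` Y))"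
        proof (cases "Y = {}")
          case True thus ?thesis by simp
        next
          case False
          have finY: "finite Y" using Y less.prems(1) unfolding L'_def using finite_subset by blast
          have "Y \<noteq> L" "Y \<subseteq> L" using v Y unfolding L'_def by auto
          hence "card Y < card (\<Union>(N ` Y))" using strict False by blast
          moreover have "\<Union>(N' ` Y) = \<Union>(N ` Y) - {y}" unfolding N'_def by auto
          moreover have "finite (\<Union>(N ` Y))" using finY Y less.prems(2) unfolding L'_def by auto
          moreover have "card (\<Union>(N ` Y)) \<le> card (\<Union>(N ` Y) - {y}) + 1"
            using card_Diff_singleton_if[of "\<Union>(N ` Y)" y] finY Y less.prems(2) unfolding L'_def by auto
          ultimately show ?thesis by simp
        qed
      qed
      have finL': "finite L'" unfolding L'_def using less.prems(1) by auto
      have "\<exists>f. inj_on f L' \<and> (\<forall>v\<in>L'. f v \<in> N' v)"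
        by (rule less.hyps[OF cL' finL']) (use hall' less.prems(2) in \<open>auto simp: L'_def N'_def\<close>)
      then obtain f2 where f2: "inj_on f2 L'" "\<forall>u\<in>L'. f2 u \<in> N' u" by blast
      define f where "f = f2(v := y)"
      have "inj_on f L"
      proof (rule inj_onI)
        fix a b assume ab: "a \<in> L" "b \<in> L" "f a = f b"
        show "a = b"
        proof (cases "a = v"; cases "b = v")
          assume "a = v" "b \<noteq> v" thus ?thesis using ab f2(2) unfolding f_def L'_def N'_def by force
        next
          assume "a \<noteq> v" "b = v" thus ?thesis using ab f2(2) unfolding f_def L'_def N'_def by force
        next
          assume "a \<noteq> v" "b \<noteq> v" thus ?thesis using ab f2(1) unfolding f_def L'_def by (auto dest: inj_onD)
        qed simp
      qed
      moreover have "\<forall>u\<in>L. f u \<in> N u" using f2(2) y unfolding f_def L'_def N'_def by auto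
      ultimately show ?thesis by blast
    qed
  qed
qed


lemma hall_countable:
  assumes cL: "countable L" and fin: "\<forall>v\<in>L. finite (N v)"
    and hall: "\<forall>Q\<subseteq>L. finite Q \<longrightarrow> card Q \<le> card (\<Union>(N ` Q))"
  shows "\<exists>f. inj_on f L \<and> (\<forall>v\<in>L. f v \<in> N v)"
proof (cases "finite L")
  case True
  have "\<forall>Q\<subseteq>L. card Q \<le> card (\<Union>(N ` Q))"
  proof (intro allI impI)
    fix Q assume Q: "Q \<subseteq> L"
    hence "finite Q" using True finite_subset by auto
    thus "card Q \<le> card (\<Union>(N ` Q))" using hall Q by blast
  qed
  thus ?thesis using hall_finite[OF True] fin by blast
next
  case inf: False
  define e where "e = from_nat_into L"
  have einj: "inj e" using bij_betw_from_nat_into[OF cL inf] unfolding e_def bij_betw_def by blast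
  have eL: "e i \<in> L" for i using bij_betw_from_nat_into[OF cL inf] unfolding e_def bij_betw_def by blast
  define good where "good = (\<lambda>n p. (\<forall>i<n. p i \<in> N (e i)) \<and> inj_on p {..<n})"
  define ext where "ext = (\<lambda>n p. \<forall>M\<ge>n. \<exists>q. good M q \<and> (\<forall>i<n. q i = p i))"
  have good_mono: "good M q" if "good M' q" "M \<le> M'" for M M' q
    using that unfolding good_def by (auto intro: inj_on_subset)
  have ex_good: "\<exists>q. good M q" for M
  proof -
    have "\<exists>f. inj_on f (e ` {..<M}) \<and> (\<forall>v\<in>e ` {..<M}. f v \<in> N v)"
    proof (rule hall_finite)
      show "\<forall>Q\<subseteq>e ` {..<M}. card Q \<le> card (\<Union>(N ` Q))"
      proof (intro allI impI)
        fix Q assume Q: "Q \<subseteq> e ` {..<M}"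
        hence "finite Q" using finite_subset by blast
        moreover have "Q \<subseteq> L" using Q eL by blast
        ultimately show "card Q \<le> card (\<Union>(N ` Q))" using hall by blast
      qed
    qed (use fin eL in auto)
    then obtain f where f: "inj_on f (e ` {..<M})" "\<forall>v\<in>e ` {..<M}. f v \<in> N v" by blast
    have "good M (f \<circ> e)" unfolding good_def using f einj
      by (auto simp: inj_on_def)
    thus ?thesis by blast
  qed
  have ext0: "ext 0 p" for p unfolding ext_def using ex_good by auto
  have ext_good: "good n p" if exn: "ext n p" for n p
  proof -
    obtain q where "good n q" "\<forall>i<n. q i = p i" using exn unfolding ext_def by blast
    thus ?thesis unfolding good_def inj_on_def by auto
  qed
  have step: "\<exists>c. ext (Suc n) (p(n := c))" if ext: "ext n p" for n p
  proof (rule ccontr)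
    assume "\<nexists>c. ext (Suc n) (p(n := c))"
    hence "\<forall>c. \<exists>M\<ge>Suc n. \<forall>q. good M q \<longrightarrow> \<not> (\<forall>i<Suc n. q i = (p(n := c)) i)"
      unfolding ext_def by simp
    from choice[OF this] obtain Mf where Mf': "\<forall>c. Mf c \<ge> Suc n \<and> (\<forall>q. good (Mf c) q \<longrightarrow> \<not> (\<forall>i<Suc n. q i = (p(n := c)) i))"
      by blast
    hence Mf: "\<And>c. Mf c \<ge> Suc n" "\<And>c q. good (Mf c) q \<Longrightarrow> \<not> (\<forall>i<Suc n. q i = (p(n := c)) i)"
      by blast+
    define M where "M = Max (insert (Suc n) (Mf ` N (e n)))"
    have finN: "finite (N (e n))" using fin eL by auto
    have M1: "Suc n \<le> M" unfolding M_def using finN by auto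
    have M2: "Mf c \<le> M" if "c \<in> N (e n)" for c unfolding M_def using finN that by auto
    have "n \<le> M" using M1 by simp
    then obtain q where q: "good M q" "\<forall>i<n. q i = p i" using ext unfolding ext_def by blast
    have qn: "q n \<in> N (e n)" using q(1) M1 unfolding good_def by auto
    have "good (Mf (q n)) q" using good_mono[OF q(1) M2[OF qn]] .
    moreover have "\<forall>i<Suc n. q i = (p(n := q n)) i" using q(2) by (auto simp: less_Suc_eq)
    ultimately show False using Mf(2) by blast
  qed
  define P where "P = rec_nat (undefined::nat \<Rightarrow> _) (\<lambda>n p. p(n := SOME c. ext (Suc n) (p(n := c))))"
  have P0: "P 0 = undefined" unfolding P_def by simp
  have PS: "P (Suc n) = (P n)(n := SOME c. ext (Suc n) ((P n)(n := c)))" for n unfolding P_def by simp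
  have extP: "ext n (P n)" for n
  proof (induction n)
    case 0 show ?case using ext0 P0 by simp
  next
    case (Suc n)
    show ?case unfolding PS using someI_ex[OF step[OF Suc]] .
  qed
  have Pstable: "P m i = P (Suc i) i" if "i < m" for m i
    using that
  proof (induction m)
    case 0 thus ?case by simp
  next
    case (Suc m)
    show ?case
    proof (cases "i = m")
      case True thus ?thesis by simp
    next
      case False thus ?thesis using Suc by (simp add: PS)
    qed
  qed
  define g where "g = (\<lambda>i. P (Suc i) i)"
  have gN: "g i \<in> N (e i)" for i using ext_good[OF extP[of "Suc i"]] unfolding g_def good_def by auto
  have ginj: "inj g"
  proof (rule injI)
    fix i j assume gij: "g i = g j"
    show "i = j"
    proof (rule ccontr)
      assume "i \<noteq> j"
      define m where "m = Suc (max i j)"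
      have "good m (P m)" using ext_good[OF extP] .
      hence "inj_on (P m) {..<m}" unfolding good_def by auto
      moreover have "P m i = g i" "P m j = g j" unfolding g_def m_def by (auto intro!: Pstable)
      ultimately show False using gij \<open>i \<noteq> j\<close> unfolding m_def by (auto simp: inj_on_def)
    qed
  qed
  define f where "f = (\<lambda>v. g (to_nat_on L v))"
  have "inj_on f L" unfolding f_def using ginj inj_on_to_nat_on[OF cL]
    by (auto simp: inj_on_def inj_def)
  moreover have "\<forall>v\<in>L. f v \<in> N v"
  proof
    fix v assume "v \<in> L"
    hence "e (to_nat_on L v) = v" unfolding e_def using cL by simp
    thus "f v \<in> N v" using gN unfolding f_def by metis
  qed
  ultimately show ?thesis by blast
qed


definition prodl :: "('a, 'b) monoid_scheme \<Rightarrow> 'a list \<Rightarrow> 'a" where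
  "prodl G l = foldr (\<lambda>x y. x \<otimes>\<^bsub>G\<^esub> y) l \<one>\<^bsub>G\<^esub>"

lemma prodl_Nil[simp]: "prodl G [] = \<one>\<^bsub>G\<^esub>" by (simp add: prodl_def)
lemma prodl_Cons[simp]: "prodl G (x # l) = x \<otimes>\<^bsub>G\<^esub> prodl G l" by (simp add: prodl_def)

lemma (in monoid) prodl_closed[simp]: "set l \<subseteq> carrier G \<Longrightarrow> prodl G l \<in> carrier G"
  by (induction l) auto

lemma (in monoid) prodl_append: "set l1 \<subseteq> carrier G \<Longrightarrow> set l2 \<subseteq> carrier G \<Longrightarrow>
  prodl G (l1 @ l2) = prodl G l1 \<otimes> prodl G l2"
  by (induction l1) (auto simp: m_assoc)

lemma (in group) gen_words:
  assumes "S \<subseteq> carrier G" "g \<in> generate G S"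
  shows "\<exists>l. set l \<subseteq> S \<union> m_inv G ` S \<and> g = prodl G l"
  using assms(2)
proof (induction rule: generate.induct)
  case one thus ?case by (intro exI[of _ "[]"]) auto
next
  case (incl h) thus ?case using assms(1) by (intro exI[of _ "[h]"]) auto
next
  case (inv h) thus ?case using assms(1) by (intro exI[of _ "[inv h]"]) auto
next
  case (eng h1 h2)
  then obtain l1 l2 where l: "set l1 \<subseteq> S \<union> m_inv G ` S" "h1 = prodl G l1"
    "set l2 \<subseteq> S \<union> m_inv G ` S" "h2 = prodl G l2" by blast
  have "S \<union> m_inv G ` S \<subseteq> carrier G" using assms(1) by auto
  hence "set l1 \<subseteq> carrier G" "set l2 \<subseteq> carrier G" using l by auto
  hence "h1 \<otimes> h2 = prodl G (l1 @ l2)" using l prodl_append by simp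
  thus ?case using l by (intro exI[of _ "l1 @ l2"]) auto
qed

lemma (in group) countable_generate:
  assumes "S \<subseteq> carrier G" "countable S"
  shows "countable (generate G S)"
proof -
  have "generate G S \<subseteq> prodl G ` lists (S \<union> m_inv G ` S)"
    using gen_words[OF assms(1)] by (auto simp: image_iff) (meson in_listsI subsetD)
  moreover have "countable (prodl G ` lists (S \<union> m_inv G ` S))" using assms(2) by auto
  ultimately show ?thesis using countable_subset by blast
qed

lemma fg_countable: "group G \<Longrightarrow> finitely_generated G \<Longrightarrow> countable (carrier G)"
  unfolding finitely_generated_def using group.countable_generate
  by (metis countable_finite)


locale mean_grp = group H for H (structure) +
  fixes \<mu> :: "'a set \<Rightarrow> real"
  assumes nonneg: "A \<subseteq> carrier H \<Longrightarrow> \<mu> A \<ge> 0"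
    and total: "\<mu> (carrier H) = 1"
    and add: "A \<subseteq> carrier H \<Longrightarrow> B \<subseteq> carrier H \<Longrightarrow> A \<inter> B = {} \<Longrightarrow> \<mu> (A \<union> B) = \<mu> A + \<mu> B"
    and inv: "g \<in> carrier H \<Longrightarrow> A \<subseteq> carrier H \<Longrightarrow> \<mu> (g <# A) = \<mu> A"
begin

lemma mono: "A \<subseteq> B \<Longrightarrow> B \<subseteq> carrier H \<Longrightarrow> \<mu> A \<le> \<mu> B"
proof -
  assume a: "A \<subseteq> B" "B \<subseteq> carrier H"
  have "B = A \<union> (B - A)" using a by auto
  hence "\<mu> B = \<mu> A + \<mu> (B - A)" using add[of A "B - A"] a by auto
  moreover have "\<mu> (B - A) \<ge> 0" using nonneg[of "B - A"] a by auto
  ultimately show ?thesis by simp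
qed

lemma union_sum:
  assumes "finite I" "\<And>i. i \<in> I \<Longrightarrow> Q i \<subseteq> carrier H"
    and "\<And>i j. i \<in> I \<Longrightarrow> j \<in> I \<Longrightarrow> i \<noteq> j \<Longrightarrow> Q i \<inter> Q j = {}"
  shows "\<mu> (\<Union>i\<in>I. Q i) = (\<Sum>i\<in>I. \<mu> (Q i))"
  using assms
proof (induction I rule: finite_induct)
  case empty
  have "\<mu> ({} \<union> {}) = \<mu> {} + \<mu> {}" by (rule add) auto
  thus ?case by simp
next
  case (insert i I)
  have "\<mu> (\<Union>j\<in>insert i I. Q j) = \<mu> (Q i \<union> (\<Union>j\<in>I. Q j))" by simp
  also have "\<dots> = \<mu> (Q i) + \<mu> (\<Union>j\<in>I. Q j)"
  proof (rule add)
    show "Q i \<inter> \<Union> (Q ` I) = {}" using insert.prems(2) insert.hyps(2) by fastforce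
  qed (use insert.prems in auto)
  also have "\<mu> (\<Union>j\<in>I. Q j) = (\<Sum>j\<in>I. \<mu> (Q j))"
    by (rule insert.IH) (use insert.prems in auto)
  finally show ?case using insert.hyps by simp
qed

end

lemma folner_left:
  assumes grp: "group H" and am: "amenable H" and cnt: "countable (carrier H)"
    and T: "finite T" "T \<subseteq> carrier H"
  shows "\<exists>B. finite B \<and> B \<noteq> {} \<and> B \<subseteq> carrier H \<and>
      card ((\<lambda>(t,b). t \<otimes>\<^bsub>H\<^esub> b) ` (T \<times> B)) < 2 * card B"
proof (rule ccontr)
  assume contra: "\<not> ?thesis"
  from am obtain \<mu> :: "'a set \<Rightarrow> real" where m1: "\<forall>A. A \<subseteq> carrier H \<longrightarrow> \<mu> A \<ge> 0" and m2: "\<mu> (carrier H) = 1"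
    and m3: "\<forall>A B. A \<subseteq> carrier H \<and> B \<subseteq> carrier H \<and> A \<inter> B = {} \<longrightarrow> \<mu> (A \<union> B) = \<mu> A + \<mu> B"
    and m4: "\<forall>g\<in>carrier H. \<forall>A. A \<subseteq> carrier H \<longrightarrow> \<mu> (g <#\<^bsub>H\<^esub> A) = \<mu> A"
    using am unfolding amenable_def by (elim exE conjE) (rule that)
  have \<mu>: "mean_grp H \<mu>"
    apply (rule mean_grp.intro[OF grp], rule mean_grp_axioms.intro)
    subgoal using m1 by simp
    subgoal using m2 by simp
    subgoal using m3 by simp
    subgoal using m4 by simp
    done
  interpret mean_grp H \<mu> by (rule \<mu>)
  define TB where "TB = (\<lambda>B. (\<lambda>(t,b). t \<otimes>\<^bsub>H\<^esub> b) ` (T \<times> B))"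
  have exp: "2 * card B \<le> card (TB B)" if "finite B" "B \<subseteq> carrier H" for B
  proof (cases "B = {}")
    case True thus ?thesis by simp
  next
    case False
    show ?thesis
    proof (rule ccontr)
      assume "\<not> 2 * card B \<le> card (TB B)"
      hence "card (TB B) < 2 * card B" by simp
      hence "\<exists>B. finite B \<and> B \<noteq> {} \<and> B \<subseteq> carrier H \<and>
        card ((\<lambda>(t,b). t \<otimes>\<^bsub>H\<^esub> b) ` (T \<times> B)) < 2 * card B"
        using False that unfolding TB_def by blast
      thus False using contra by simp
    qed
  qed
  define L where "L = carrier H \<times> (UNIV :: bool set)"
  define N where "N = (\<lambda>(h::'a, i::bool). (\<lambda>t. t \<otimes>\<^bsub>H\<^esub> h) ` T)"
  have cL: "countable L" unfolding L_def using cnt by auto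
  have finN: "\<forall>v\<in>L. finite (N v)" unfolding N_def using T by auto
  have hall: "\<forall>Q\<subseteq>L. finite Q \<longrightarrow> card Q \<le> card (\<Union>(N ` Q))"
  proof (intro allI impI)
    fix Q assume Q: "Q \<subseteq> L" "finite Q"
    define B where "B = fst ` Q"
    have fB: "finite B" "B \<subseteq> carrier H" using Q unfolding B_def L_def by auto
    have "Q \<subseteq> B \<times> (UNIV :: bool set)" using subset_fst_snd[of Q] unfolding B_def by blast
    hence "card Q \<le> card (B \<times> (UNIV :: bool set))" by (rule card_mono[rotated]) (use fB in auto)
    also have "\<dots> = 2 * card B" by (simp add: card_cartesian_product mult.commute)
    also have "\<dots> \<le> card (TB B)" using exp fB by auto
    also have "TB B = \<Union>(N ` Q)" unfolding TB_def N_def B_def by force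
    finally show "card Q \<le> card (\<Union>(N ` Q))" .
  qed
  obtain f where f: "inj_on f L" "\<forall>v\<in>L. f v \<in> N v" using hall_countable[OF cL finN hall] by blast
  define Im where "Im = (\<lambda>i. (\<lambda>h. f (h, i)) ` carrier H)"
  have Imc: "Im i \<subseteq> carrier H" for i
  proof
    fix x assume "x \<in> Im i"
    then obtain h where h: "h \<in> carrier H" "x = f (h, i)" unfolding Im_def by auto
    hence "x \<in> N (h, i)" using f(2) unfolding L_def by auto
    thus "x \<in> carrier H" using T h unfolding N_def by auto
  qed
  have Im1: "\<mu> (Im i) = 1" for i
  proof -
    have exT: "\<exists>t\<in>T. f (h, i) = t \<otimes>\<^bsub>H\<^esub> h" if "h \<in> carrier H" for h
      using f(2) that unfolding L_def N_def by auto
    define \<tau> where "\<tau> = (\<lambda>h. SOME t. t \<in> T \<and> f (h, i) = t \<otimes>\<^bsub>H\<^esub> h)"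
    have \<tau>: "\<tau> h \<in> T" "f (h, i) = \<tau> h \<otimes>\<^bsub>H\<^esub> h" if "h \<in> carrier H" for h
      using someI_ex[OF exT[OF that, unfolded Bex_def]] unfolding \<tau>_def by auto
    define P where "P = (\<lambda>t. {h \<in> carrier H. \<tau> h = t})"
    have Pc: "P t \<subseteq> carrier H" for t unfolding P_def by auto
    have "Im i = (\<Union>t\<in>T. t <#\<^bsub>H\<^esub> P t)"
    proof
      show "Im i \<subseteq> (\<Union>t\<in>T. t <#\<^bsub>H\<^esub> P t)"
      proof
        fix x assume "x \<in> Im i"
        then obtain h where h: "h \<in> carrier H" "x = f (h, i)" unfolding Im_def by auto
        thus "x \<in> (\<Union>t\<in>T. t <#\<^bsub>H\<^esub> P t)" using \<tau>[OF h(1)] unfolding P_def l_coset_def by auto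
      qed
      show "(\<Union>t\<in>T. t <#\<^bsub>H\<^esub> P t) \<subseteq> Im i"
      proof
        fix x assume "x \<in> (\<Union>t\<in>T. t <#\<^bsub>H\<^esub> P t)"
        then obtain t h where "t \<in> T" "h \<in> P t" "x = t \<otimes>\<^bsub>H\<^esub> h" unfolding l_coset_def by auto
        hence "x = f (h, i)" "h \<in> carrier H" using \<tau> unfolding P_def by auto
        thus "x \<in> Im i" unfolding Im_def by auto
      qed
    qed
    hence "\<mu> (Im i) = (\<Sum>t\<in>T. \<mu> (t <#\<^bsub>H\<^esub> P t))"
    proof (simp only:, intro union_sum)
      show "finite T" by (rule T(1))
      show "t <#\<^bsub>H\<^esub> P t \<subseteq> carrier H" if "t \<in> T" for t using that T(2) Pc l_coset_subset_G by blast
      show "(t <#\<^bsub>H\<^esub> P t) \<inter> (t' <#\<^bsub>H\<^esub> P t') = {}" if "t \<in> T" "t' \<in> T" "t \<noteq> t'" for t t'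
      proof (rule ccontr)
        assume "(t <#\<^bsub>H\<^esub> P t) \<inter> (t' <#\<^bsub>H\<^esub> P t') \<noteq> {}"
        then obtain h h' where hh: "h \<in> P t" "h' \<in> P t'" "t \<otimes>\<^bsub>H\<^esub> h = t' \<otimes>\<^bsub>H\<^esub> h'" unfolding l_coset_def by auto
        have hc: "h \<in> carrier H" "h' \<in> carrier H" using hh unfolding P_def by auto
        have "f (h, i) = f (h', i)" using hh \<tau>[OF hc(1)] \<tau>[OF hc(2)] unfolding P_def by auto
        hence "h = h'" using f(1) hc unfolding L_def by (auto dest: inj_onD)
        hence "t = t'" using hh hc T(2) that by (metis r_cancel subsetD)
        thus False using that by simp
      qed
    qed
    also have "\<dots> = (\<Sum>t\<in>T. \<mu> (P t))" using inv T(2) Pc by (auto intro!: sum.cong)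
    also have "\<dots> = \<mu> (\<Union>t\<in>T. P t)" by (rule union_sum[symmetric]) (use T Pc in \<open>auto simp: P_def\<close>)
    also have "(\<Union>t\<in>T. P t) = carrier H" unfolding P_def using \<tau> by auto
    finally show ?thesis using total by simp
  qed
  have disj: "Im True \<inter> Im False = {}"
    using f(1) unfolding Im_def L_def by (auto dest: inj_onD)
  have "\<mu> (Im True \<union> Im False) = 2" using add[OF Imc Imc disj] Im1 by simp
  moreover have "\<mu> (Im True \<union> Im False) \<le> 1" using mono[of "Im True \<union> Im False" "carrier H"] Imc total by auto
  ultimately show False by simp
qed


locale amalg = G1: group G1 + G2: group G2 + HH: group H + P1: group_hom H G1 \<phi>1 + P2: group_hom H G2 \<phi>2
  for G1 :: "('a, 'c) monoid_scheme" and G2 :: "('b, 'd) monoid_scheme" and H :: "('h, 'e) monoid_scheme"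
    and \<phi>1 :: "'h \<Rightarrow> 'a" and \<phi>2 :: "'h \<Rightarrow> 'b" +
  assumes inj1: "inj_on \<phi>1 (carrier H)" and inj2: "inj_on \<phi>2 (carrier H)"
begin

definition H1 :: "'a set" where "H1 = \<phi>1 ` carrier H"
definition H2 :: "'b set" where "H2 = \<phi>2 ` carrier H"

definition Cos1 :: "'a \<Rightarrow> 'a set" where
  "Cos1 y = (\<lambda>h. \<phi>1 h \<otimes>\<^bsub>G1\<^esub> y) ` carrier H"

definition rep1 :: "'a \<Rightarrow> 'a" where
  "rep1 y = (if y \<in> H1 then \<one>\<^bsub>G1\<^esub> else (SOME c. c \<in> Cos1 y))"

definition hp1 :: "'a \<Rightarrow> 'h" where
  "hp1 y = inv_into (carrier H) \<phi>1 (y \<otimes>\<^bsub>G1\<^esub> inv\<^bsub>G1\<^esub> (rep1 y))"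

lemma H1_closed: "h \<in> carrier H \<Longrightarrow> \<phi>1 h \<in> H1" unfolding H1_def by auto

lemma H1_sub: "H1 \<subseteq> carrier G1" unfolding H1_def by auto

lemma H1_mult_iff: "h \<in> carrier H \<Longrightarrow> y \<in> carrier G1 \<Longrightarrow> \<phi>1 h \<otimes>\<^bsub>G1\<^esub> y \<in> H1 \<longleftrightarrow> y \<in> H1"
proof
  assume a: "h \<in> carrier H" "y \<in> carrier G1" "\<phi>1 h \<otimes>\<^bsub>G1\<^esub> y \<in> H1"
  then obtain k where k: "k \<in> carrier H" "\<phi>1 h \<otimes>\<^bsub>G1\<^esub> y = \<phi>1 k" unfolding H1_def by auto
  have "y = inv\<^bsub>G1\<^esub> (\<phi>1 h) \<otimes>\<^bsub>G1\<^esub> \<phi>1 k" using k a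
    by (metis G1.inv_solve_left P1.hom_closed)
  also have "\<dots> = \<phi>1 (inv\<^bsub>H\<^esub> h \<otimes>\<^bsub>H\<^esub> k)" using a k by simp
  finally have "y = \<phi>1 (inv\<^bsub>H\<^esub> h \<otimes>\<^bsub>H\<^esub> k)" .
  moreover have "inv\<^bsub>H\<^esub> h \<otimes>\<^bsub>H\<^esub> k \<in> carrier H" using a k by simp
  ultimately show "y \<in> H1" unfolding H1_def by blast
next
  assume a: "h \<in> carrier H" "y \<in> carrier G1" "y \<in> H1"
  then obtain k where k: "k \<in> carrier H" "y = \<phi>1 k" unfolding H1_def by auto
  thus "\<phi>1 h \<otimes>\<^bsub>G1\<^esub> y \<in> H1" using a unfolding H1_def by (auto intro!: image_eqI[of _ _ "h \<otimes>\<^bsub>H\<^esub> k"])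
qed

lemma Cos1_left: "h \<in> carrier H \<Longrightarrow> y \<in> carrier G1 \<Longrightarrow> Cos1 (\<phi>1 h \<otimes>\<^bsub>G1\<^esub> y) = Cos1 y"
proof
  assume a: "h \<in> carrier H" "y \<in> carrier G1"
  show "Cos1 (\<phi>1 h \<otimes>\<^bsub>G1\<^esub> y) \<subseteq> Cos1 y"
  proof
    fix x assume "x \<in> Cos1 (\<phi>1 h \<otimes>\<^bsub>G1\<^esub> y)"
    then obtain k where k: "k \<in> carrier H" "x = \<phi>1 k \<otimes>\<^bsub>G1\<^esub> (\<phi>1 h \<otimes>\<^bsub>G1\<^esub> y)" unfolding Cos1_def by auto
    hence "x = \<phi>1 (k \<otimes>\<^bsub>H\<^esub> h) \<otimes>\<^bsub>G1\<^esub> y" using a by (simp add: G1.m_assoc)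
    moreover have "k \<otimes>\<^bsub>H\<^esub> h \<in> carrier H" using a k by simp
    ultimately show "x \<in> Cos1 y" unfolding Cos1_def by blast
  qed
  show "Cos1 y \<subseteq> Cos1 (\<phi>1 h \<otimes>\<^bsub>G1\<^esub> y)"
  proof
    fix x assume "x \<in> Cos1 y"
    then obtain k where k: "k \<in> carrier H" "x = \<phi>1 k \<otimes>\<^bsub>G1\<^esub> y" unfolding Cos1_def by auto
    hence "x = \<phi>1 (k \<otimes>\<^bsub>H\<^esub> inv\<^bsub>H\<^esub> h) \<otimes>\<^bsub>G1\<^esub> (\<phi>1 h \<otimes>\<^bsub>G1\<^esub> y)" using a
      by (simp add: G1.m_assoc[symmetric] HH.m_assoc P1.hom_inv) (simp add: G1.m_assoc)
    moreover have "k \<otimes>\<^bsub>H\<^esub> inv\<^bsub>H\<^esub> h \<in> carrier H" using a k by simp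
    ultimately show "x \<in> Cos1 (\<phi>1 h \<otimes>\<^bsub>G1\<^esub> y)" unfolding Cos1_def by blast
  qed
qed

lemma rep1_H: "y \<in> H1 \<Longrightarrow> rep1 y = \<one>\<^bsub>G1\<^esub>" unfolding rep1_def by simp

lemma rep1_props: assumes "y \<in> carrier G1"
  shows "rep1 y \<in> carrier G1" "\<exists>h\<in>carrier H. \<phi>1 h \<otimes>\<^bsub>G1\<^esub> rep1 y = y"
proof -
  have "rep1 y \<in> carrier G1 \<and> (\<exists>h\<in>carrier H. \<phi>1 h \<otimes>\<^bsub>G1\<^esub> rep1 y = y)"
  proof (cases "y \<in> H1")
    case True
    then obtain h where "h \<in> carrier H" "\<phi>1 h = y" unfolding H1_def by auto
    thus ?thesis using True by (auto simp: rep1_H)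
  next
    case False
    have "y \<in> Cos1 y" unfolding Cos1_def using assms by (auto intro!: image_eqI[of _ _ "\<one>\<^bsub>H\<^esub>"])
    hence "rep1 y \<in> Cos1 y" unfolding rep1_def using False by (auto intro: someI)
    then obtain k where k: "k \<in> carrier H" "rep1 y = \<phi>1 k \<otimes>\<^bsub>G1\<^esub> y" unfolding Cos1_def by auto
    have "\<phi>1 (inv\<^bsub>H\<^esub> k) \<otimes>\<^bsub>G1\<^esub> rep1 y = y" using k assms
      by (simp add: G1.m_assoc[symmetric] P1.hom_inv)
    moreover have "rep1 y \<in> carrier G1" using k assms by simp
    moreover have "inv\<^bsub>H\<^esub> k \<in> carrier H" using k by simp
    ultimately show ?thesis by blast
  qed
  thus "rep1 y \<in> carrier G1" "\<exists>h\<in>carrier H. \<phi>1 h \<otimes>\<^bsub>G1\<^esub> rep1 y = y" by auto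
qed

lemma rep1_left: assumes "h \<in> carrier H" "y \<in> carrier G1"
  shows "rep1 (\<phi>1 h \<otimes>\<^bsub>G1\<^esub> y) = rep1 y"
  using assms H1_mult_iff[OF assms] Cos1_left[OF assms] unfolding rep1_def by simp

lemma rep1_notin: assumes "y \<in> carrier G1" "y \<notin> H1" shows "rep1 y \<notin> H1"
proof
  assume r: "rep1 y \<in> H1"
  obtain h where h: "h \<in> carrier H" "\<phi>1 h \<otimes>\<^bsub>G1\<^esub> rep1 y = y" using rep1_props[OF assms(1)] by blast
  have "\<phi>1 h \<otimes>\<^bsub>G1\<^esub> rep1 y \<in> H1" using H1_mult_iff[OF h(1) rep1_props(1)[OF assms(1)]] r by simp
  thus False using h(2) assms(2) by simp
qed

lemma rep1_idem: assumes "y \<in> carrier G1" shows "rep1 (rep1 y) = rep1 y"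
proof -
  obtain h where h: "h \<in> carrier H" "\<phi>1 h \<otimes>\<^bsub>G1\<^esub> rep1 y = y" using rep1_props[OF assms] by blast
  have c: "rep1 y \<in> carrier G1" "\<phi>1 h \<in> carrier G1" using rep1_props[OF assms] h by auto
  have "rep1 y = inv\<^bsub>G1\<^esub> (\<phi>1 h) \<otimes>\<^bsub>G1\<^esub> y" using G1.inv_solve_left[OF c(1) c(2) assms] h(2) by simp
  hence "rep1 y = \<phi>1 (inv\<^bsub>H\<^esub> h) \<otimes>\<^bsub>G1\<^esub> y" using h(1) by (simp add: P1.hom_inv)
  hence "rep1 (rep1 y) = rep1 (\<phi>1 (inv\<^bsub>H\<^esub> h) \<otimes>\<^bsub>G1\<^esub> y)" by (rule arg_cong)
  also have "\<dots> = rep1 y" using rep1_left[of "inv\<^bsub>H\<^esub> h" y] h(1) assms by simp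
  finally show ?thesis .
qed

lemma hp1_props: assumes "y \<in> carrier G1"
  shows "hp1 y \<in> carrier H" "\<phi>1 (hp1 y) \<otimes>\<^bsub>G1\<^esub> rep1 y = y"
proof -
  obtain h where h: "h \<in> carrier H" "\<phi>1 h \<otimes>\<^bsub>G1\<^esub> rep1 y = y" using rep1_props[OF assms] by blast
  have c: "rep1 y \<in> carrier G1" "\<phi>1 h \<in> carrier G1" using rep1_props[OF assms] h by auto
  have e: "y \<otimes>\<^bsub>G1\<^esub> inv\<^bsub>G1\<^esub> (rep1 y) = \<phi>1 h"
    using G1.inv_solve_right[OF c(2) assms c(1)] h(2) by simp
  show "hp1 y \<in> carrier H" unfolding hp1_def e using h by (auto intro: inv_into_into)
  have "\<phi>1 (hp1 y) = \<phi>1 h" unfolding hp1_def e using h by (auto intro: f_inv_into_f)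
  thus "\<phi>1 (hp1 y) \<otimes>\<^bsub>G1\<^esub> rep1 y = y" using h(2) by simp
qed

lemma hp1_unique: assumes "h \<in> carrier H" "c \<in> carrier G1" "rep1 c = c"
  shows "hp1 (\<phi>1 h \<otimes>\<^bsub>G1\<^esub> c) = h"
proof -
  have y: "\<phi>1 h \<otimes>\<^bsub>G1\<^esub> c \<in> carrier G1" using assms by simp
  have r: "rep1 (\<phi>1 h \<otimes>\<^bsub>G1\<^esub> c) = c" using rep1_left[OF assms(1,2)] assms(3) by simp
  have "\<phi>1 (hp1 (\<phi>1 h \<otimes>\<^bsub>G1\<^esub> c)) \<otimes>\<^bsub>G1\<^esub> c = \<phi>1 h \<otimes>\<^bsub>G1\<^esub> c" using hp1_props[OF y] r by simp
  hence "\<phi>1 (hp1 (\<phi>1 h \<otimes>\<^bsub>G1\<^esub> c)) = \<phi>1 h" using assms hp1_props(1)[OF y] by (meson G1.r_cancel P1.hom_closed)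
  thus ?thesis using inj1 assms(1) hp1_props(1)[OF y] by (auto dest: inj_onD)
qed

lemma hp1_H: assumes "h \<in> carrier H" shows "hp1 (\<phi>1 h) = h"
proof -
  have "rep1 \<one>\<^bsub>G1\<^esub> = \<one>\<^bsub>G1\<^esub>" using rep1_H[of "\<one>\<^bsub>G1\<^esub>"] H1_closed[of "\<one>\<^bsub>H\<^esub>"] by simp
  thus ?thesis using hp1_unique[OF assms, of "\<one>\<^bsub>G1\<^esub>"] assms by simp
qed

definition Cos2 :: "'b \<Rightarrow> 'b set" where
  "Cos2 y = (\<lambda>h. \<phi>2 h \<otimes>\<^bsub>G2\<^esub> y) ` carrier H"

definition rep2 :: "'b \<Rightarrow> 'b" where
  "rep2 y = (if y \<in> H2 then \<one>\<^bsub>G2\<^esub> else (SOME c. c \<in> Cos2 y))"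

definition hp2 :: "'b \<Rightarrow> 'h" where
  "hp2 y = inv_into (carrier H) \<phi>2 (y \<otimes>\<^bsub>G2\<^esub> inv\<^bsub>G2\<^esub> (rep2 y))"

lemma H2_closed: "h \<in> carrier H \<Longrightarrow> \<phi>2 h \<in> H2" unfolding H2_def by auto

lemma H2_sub: "H2 \<subseteq> carrier G2" unfolding H2_def by auto

lemma H2_mult_iff: "h \<in> carrier H \<Longrightarrow> y \<in> carrier G2 \<Longrightarrow> \<phi>2 h \<otimes>\<^bsub>G2\<^esub> y \<in> H2 \<longleftrightarrow> y \<in> H2"
proof
  assume a: "h \<in> carrier H" "y \<in> carrier G2" "\<phi>2 h \<otimes>\<^bsub>G2\<^esub> y \<in> H2"
  then obtain k where k: "k \<in> carrier H" "\<phi>2 h \<otimes>\<^bsub>G2\<^esub> y = \<phi>2 k" unfolding H2_def by auto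
  have "y = inv\<^bsub>G2\<^esub> (\<phi>2 h) \<otimes>\<^bsub>G2\<^esub> \<phi>2 k" using k a
    by (metis G2.inv_solve_left P2.hom_closed)
  also have "\<dots> = \<phi>2 (inv\<^bsub>H\<^esub> h \<otimes>\<^bsub>H\<^esub> k)" using a k by simp
  finally have "y = \<phi>2 (inv\<^bsub>H\<^esub> h \<otimes>\<^bsub>H\<^esub> k)" .
  moreover have "inv\<^bsub>H\<^esub> h \<otimes>\<^bsub>H\<^esub> k \<in> carrier H" using a k by simp
  ultimately show "y \<in> H2" unfolding H2_def by blast
next
  assume a: "h \<in> carrier H" "y \<in> carrier G2" "y \<in> H2"
  then obtain k where k: "k \<in> carrier H" "y = \<phi>2 k" unfolding H2_def by auto
  thus "\<phi>2 h \<otimes>\<^bsub>G2\<^esub> y \<in> H2" using a unfolding H2_def by (auto intro!: image_eqI[of _ _ "h \<otimes>\<^bsub>H\<^esub> k"])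
qed

lemma Cos2_left: "h \<in> carrier H \<Longrightarrow> y \<in> carrier G2 \<Longrightarrow> Cos2 (\<phi>2 h \<otimes>\<^bsub>G2\<^esub> y) = Cos2 y"
proof
  assume a: "h \<in> carrier H" "y \<in> carrier G2"
  show "Cos2 (\<phi>2 h \<otimes>\<^bsub>G2\<^esub> y) \<subseteq> Cos2 y"
  proof
    fix x assume "x \<in> Cos2 (\<phi>2 h \<otimes>\<^bsub>G2\<^esub> y)"
    then obtain k where k: "k \<in> carrier H" "x = \<phi>2 k \<otimes>\<^bsub>G2\<^esub> (\<phi>2 h \<otimes>\<^bsub>G2\<^esub> y)" unfolding Cos2_def by auto
    hence "x = \<phi>2 (k \<otimes>\<^bsub>H\<^esub> h) \<otimes>\<^bsub>G2\<^esub> y" using a by (simp add: G2.m_assoc)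
    moreover have "k \<otimes>\<^bsub>H\<^esub> h \<in> carrier H" using a k by simp
    ultimately show "x \<in> Cos2 y" unfolding Cos2_def by blast
  qed
  show "Cos2 y \<subseteq> Cos2 (\<phi>2 h \<otimes>\<^bsub>G2\<^esub> y)"
  proof
    fix x assume "x \<in> Cos2 y"
    then obtain k where k: "k \<in> carrier H" "x = \<phi>2 k \<otimes>\<^bsub>G2\<^esub> y" unfolding Cos2_def by auto
    hence "x = \<phi>2 (k \<otimes>\<^bsub>H\<^esub> inv\<^bsub>H\<^esub> h) \<otimes>\<^bsub>G2\<^esub> (\<phi>2 h \<otimes>\<^bsub>G2\<^esub> y)" using a
      by (simp add: G2.m_assoc[symmetric] HH.m_assoc P2.hom_inv) (simp add: G2.m_assoc)
    moreover have "k \<otimes>\<^bsub>H\<^esub> inv\<^bsub>H\<^esub> h \<in> carrier H" using a k by simp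
    ultimately show "x \<in> Cos2 (\<phi>2 h \<otimes>\<^bsub>G2\<^esub> y)" unfolding Cos2_def by blast
  qed
qed

lemma rep2_H: "y \<in> H2 \<Longrightarrow> rep2 y = \<one>\<^bsub>G2\<^esub>" unfolding rep2_def by simp

lemma rep2_props: assumes "y \<in> carrier G2"
  shows "rep2 y \<in> carrier G2" "\<exists>h\<in>carrier H. \<phi>2 h \<otimes>\<^bsub>G2\<^esub> rep2 y = y"
proof -
  have "rep2 y \<in> carrier G2 \<and> (\<exists>h\<in>carrier H. \<phi>2 h \<otimes>\<^bsub>G2\<^esub> rep2 y = y)"
  proof (cases "y \<in> H2")
    case True
    then obtain h where "h \<in> carrier H" "\<phi>2 h = y" unfolding H2_def by auto
    thus ?thesis using True by (auto simp: rep2_H)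
  next
    case False
    have "y \<in> Cos2 y" unfolding Cos2_def using assms by (auto intro!: image_eqI[of _ _ "\<one>\<^bsub>H\<^esub>"])
    hence "rep2 y \<in> Cos2 y" unfolding rep2_def using False by (auto intro: someI)
    then obtain k where k: "k \<in> carrier H" "rep2 y = \<phi>2 k \<otimes>\<^bsub>G2\<^esub> y" unfolding Cos2_def by auto
    have "\<phi>2 (inv\<^bsub>H\<^esub> k) \<otimes>\<^bsub>G2\<^esub> rep2 y = y" using k assms
      by (simp add: G2.m_assoc[symmetric] P2.hom_inv)
    moreover have "rep2 y \<in> carrier G2" using k assms by simp
    moreover have "inv\<^bsub>H\<^esub> k \<in> carrier H" using k by simp
    ultimately show ?thesis by blast
  qed
  thus "rep2 y \<in> carrier G2" "\<exists>h\<in>carrier H. \<phi>2 h \<otimes>\<^bsub>G2\<^esub> rep2 y = y" by auto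
qed

lemma rep2_left: assumes "h \<in> carrier H" "y \<in> carrier G2"
  shows "rep2 (\<phi>2 h \<otimes>\<^bsub>G2\<^esub> y) = rep2 y"
  using assms H2_mult_iff[OF assms] Cos2_left[OF assms] unfolding rep2_def by simp

lemma rep2_notin: assumes "y \<in> carrier G2" "y \<notin> H2" shows "rep2 y \<notin> H2"
proof
  assume r: "rep2 y \<in> H2"
  obtain h where h: "h \<in> carrier H" "\<phi>2 h \<otimes>\<^bsub>G2\<^esub> rep2 y = y" using rep2_props[OF assms(1)] by blast
  have "\<phi>2 h \<otimes>\<^bsub>G2\<^esub> rep2 y \<in> H2" using H2_mult_iff[OF h(1) rep2_props(1)[OF assms(1)]] r by simp
  thus False using h(2) assms(2) by simp
qed

lemma rep2_idem: assumes "y \<in> carrier G2" shows "rep2 (rep2 y) = rep2 y"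
proof -
  obtain h where h: "h \<in> carrier H" "\<phi>2 h \<otimes>\<^bsub>G2\<^esub> rep2 y = y" using rep2_props[OF assms] by blast
  have c: "rep2 y \<in> carrier G2" "\<phi>2 h \<in> carrier G2" using rep2_props[OF assms] h by auto
  have "rep2 y = inv\<^bsub>G2\<^esub> (\<phi>2 h) \<otimes>\<^bsub>G2\<^esub> y" using G2.inv_solve_left[OF c(1) c(2) assms] h(2) by simp
  hence "rep2 y = \<phi>2 (inv\<^bsub>H\<^esub> h) \<otimes>\<^bsub>G2\<^esub> y" using h(1) by (simp add: P2.hom_inv)
  hence "rep2 (rep2 y) = rep2 (\<phi>2 (inv\<^bsub>H\<^esub> h) \<otimes>\<^bsub>G2\<^esub> y)" by (rule arg_cong)
  also have "\<dots> = rep2 y" using rep2_left[of "inv\<^bsub>H\<^esub> h" y] h(1) assms by simp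
  finally show ?thesis .
qed

lemma hp2_props: assumes "y \<in> carrier G2"
  shows "hp2 y \<in> carrier H" "\<phi>2 (hp2 y) \<otimes>\<^bsub>G2\<^esub> rep2 y = y"
proof -
  obtain h where h: "h \<in> carrier H" "\<phi>2 h \<otimes>\<^bsub>G2\<^esub> rep2 y = y" using rep2_props[OF assms] by blast
  have c: "rep2 y \<in> carrier G2" "\<phi>2 h \<in> carrier G2" using rep2_props[OF assms] h by auto
  have e: "y \<otimes>\<^bsub>G2\<^esub> inv\<^bsub>G2\<^esub> (rep2 y) = \<phi>2 h"
    using G2.inv_solve_right[OF c(2) assms c(1)] h(2) by simp
  show "hp2 y \<in> carrier H" unfolding hp2_def e using h by (auto intro: inv_into_into)
  have "\<phi>2 (hp2 y) = \<phi>2 h" unfolding hp2_def e using h by (auto intro: f_inv_into_f)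
  thus "\<phi>2 (hp2 y) \<otimes>\<^bsub>G2\<^esub> rep2 y = y" using h(2) by simp
qed

lemma hp2_unique: assumes "h \<in> carrier H" "c \<in> carrier G2" "rep2 c = c"
  shows "hp2 (\<phi>2 h \<otimes>\<^bsub>G2\<^esub> c) = h"
proof -
  have y: "\<phi>2 h \<otimes>\<^bsub>G2\<^esub> c \<in> carrier G2" using assms by simp
  have r: "rep2 (\<phi>2 h \<otimes>\<^bsub>G2\<^esub> c) = c" using rep2_left[OF assms(1,2)] assms(3) by simp
  have "\<phi>2 (hp2 (\<phi>2 h \<otimes>\<^bsub>G2\<^esub> c)) \<otimes>\<^bsub>G2\<^esub> c = \<phi>2 h \<otimes>\<^bsub>G2\<^esub> c" using hp2_props[OF y] r by simp
  hence "\<phi>2 (hp2 (\<phi>2 h \<otimes>\<^bsub>G2\<^esub> c)) = \<phi>2 h" using assms hp2_props(1)[OF y] by (meson G2.r_cancel P2.hom_closed)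
  thus ?thesis using inj2 assms(1) hp2_props(1)[OF y] by (auto dest: inj_onD)
qed

lemma hp2_H: assumes "h \<in> carrier H" shows "hp2 (\<phi>2 h) = h"
proof -
  have "rep2 \<one>\<^bsub>G2\<^esub> = \<one>\<^bsub>G2\<^esub>" using rep2_H[of "\<one>\<^bsub>G2\<^esub>"] H2_closed[of "\<one>\<^bsub>H\<^esub>"] by simp
  thus ?thesis using hp2_unique[OF assms, of "\<one>\<^bsub>G2\<^esub>"] assms by simp
qed


definition okz :: "'a + 'b \<Rightarrow> bool" where
  "okz z = (case z of Inl c \<Rightarrow> c \<in> carrier G1 \<and> c \<notin> H1 \<and> rep1 c = c
                    | Inr d \<Rightarrow> d \<in> carrier G2 \<and> d \<notin> H2 \<and> rep2 d = d)"

fun alt :: "('a + 'b) list \<Rightarrow> bool" where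
  "alt (x # y # r) = (isl x \<noteq> isl y \<and> alt (y # r))"
| "alt _ = True"

fun nL :: "('a + 'b) list \<Rightarrow> bool" where
  "nL (Inl c # r) = False"
| "nL t = True"

fun nR :: "('a + 'b) list \<Rightarrow> bool" where
  "nR (Inr c # r) = False"
| "nR t = True"

definition red :: "('a + 'b) list \<Rightarrow> bool" where
  "red t = (alt t \<and> (\<forall>z\<in>set t. okz z))"

definition WS :: "('h \<times> ('a + 'b) list) set" where
  "WS = {(h, t). h \<in> carrier H \<and> red t}"

lemma red_Nil[simp]: "red []" by (simp add: red_def)

lemma alt_Cons: "alt (x # t) \<longleftrightarrow> alt t \<and> (t \<noteq> [] \<longrightarrow> isl (hd t) \<noteq> isl x)"
  by (cases t) auto

lemma nL_iff: "nL t \<longleftrightarrow> (t = [] \<or> \<not> isl (hd t))"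
  by (cases t rule: nL.cases) auto

lemma nR_iff: "nR t \<longleftrightarrow> (t = [] \<or> isl (hd t))"
  by (cases t rule: nR.cases) auto

lemma red_Inl: "red (Inl c # t) \<longleftrightarrow> okz (Inl c) \<and> nL t \<and> red t"
  unfolding red_def alt_Cons nL_iff by auto

lemma red_Inr: "red (Inr c # t) \<longleftrightarrow> okz (Inr c) \<and> nR t \<and> red t"
  unfolding red_def alt_Cons nR_iff by auto

fun g1part :: "'h \<times> ('a + 'b) list \<Rightarrow> 'a" where
  "g1part (h, Inl c # r) = \<phi>1 h \<otimes>\<^bsub>G1\<^esub> c"
| "g1part (h, t) = \<phi>1 h"

fun tail1 :: "('a + 'b) list \<Rightarrow> ('a + 'b) list" where
  "tail1 (Inl c # r) = r"
| "tail1 t = t"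

definition build1 :: "'a \<Rightarrow> ('a + 'b) list \<Rightarrow> 'h \<times> ('a + 'b) list" where
  "build1 z t = (hp1 z, if z \<in> H1 then t else Inl (rep1 z) # t)"

definition act1 :: "'a \<Rightarrow> 'h \<times> ('a + 'b) list \<Rightarrow> 'h \<times> ('a + 'b) list" where
  "act1 x w = build1 (x \<otimes>\<^bsub>G1\<^esub> g1part w) (tail1 (snd w))"

lemma g1part_closed: "w \<in> WS \<Longrightarrow> g1part w \<in> carrier G1"
  by (cases w rule: g1part.cases) (auto simp: WS_def okz_def red_Inl)

lemma tail1_props: "w \<in> WS \<Longrightarrow> red (tail1 (snd w)) \<and> nL (tail1 (snd w))"
  by (cases "snd w" rule: tail1.cases) (auto simp: WS_def red_Inl)

lemma build1_X: assumes "z \<in> carrier G1" "red t" "nL t" shows "build1 z t \<in> WS"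
proof (cases "z \<in> H1")
  case True thus ?thesis unfolding build1_def WS_def using assms hp1_props(1)[OF assms(1)] by simp
next
  case False
  have "okz (Inl (rep1 z))" unfolding okz_def
    using rep1_props(1)[OF assms(1)] rep1_notin[OF assms(1) False] rep1_idem[OF assms(1)] by simp
  hence "red (Inl (rep1 z) # t)" using assms by (simp add: red_Inl)
  thus ?thesis unfolding build1_def WS_def using False hp1_props(1)[OF assms(1)] by simp
qed

lemma g1part_build1: "z \<in> carrier G1 \<Longrightarrow> nL t \<Longrightarrow> g1part (build1 z t) = z"
proof -
  assume a: "z \<in> carrier G1" "nL t"
  show ?thesis
  proof (cases "z \<in> H1")
    case True
    have "g1part (build1 z t) = \<phi>1 (hp1 z)" unfolding build1_def using True a(2)
      by (cases t rule: tail1.cases) auto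
    also have "\<dots> = \<phi>1 (hp1 z) \<otimes>\<^bsub>G1\<^esub> rep1 z" using True hp1_props[OF a(1)] a(1) by (simp add: rep1_H)
    finally show ?thesis using hp1_props[OF a(1)] by simp
  next
    case False thus ?thesis unfolding build1_def using hp1_props[OF a(1)] by simp
  qed
qed

lemma tail1_build1: "nL t \<Longrightarrow> tail1 (snd (build1 z t)) = t"
  unfolding build1_def by (cases t rule: tail1.cases) auto

lemma build1_g1part: assumes "w \<in> WS" shows "build1 (g1part w) (tail1 (snd w)) = w"
proof -
  obtain h t where w: "w = (h, t)" by (cases w)
  have h: "h \<in> carrier H" and rt: "red t" using assms w unfolding WS_def by auto
  show ?thesis
  proof (cases t rule: tail1.cases)
    case (1 c r)
    have c: "c \<in> carrier G1" "c \<notin> H1" "rep1 c = c" using rt 1 by (auto simp: red_def okz_def)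
    have "\<phi>1 h \<otimes>\<^bsub>G1\<^esub> c \<notin> H1" using H1_mult_iff[OF h c(1)] c(2) by simp
    thus ?thesis unfolding build1_def w 1 using hp1_unique[OF h c(1) c(3)] rep1_left[OF h c(1)] c(3) by simp
  next
    case ("2_1")
    thus ?thesis unfolding build1_def w using hp1_H[OF h] H1_closed[OF h] by simp
  next
    case ("2_2" d r)
    thus ?thesis unfolding build1_def w using hp1_H[OF h] H1_closed[OF h] by simp
  qed
qed

lemma act1_X: "x \<in> carrier G1 \<Longrightarrow> w \<in> WS \<Longrightarrow> act1 x w \<in> WS"
  unfolding act1_def using build1_X g1part_closed tail1_props by simp

lemma act1_mult: assumes "x \<in> carrier G1" "y \<in> carrier G1" "w \<in> WS"
  shows "act1 x (act1 y w) = act1 (x \<otimes>\<^bsub>G1\<^esub> y) w"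
proof -
  have z: "y \<otimes>\<^bsub>G1\<^esub> g1part w \<in> carrier G1" using assms g1part_closed by simp
  have t: "nL (tail1 (snd w))" using tail1_props[OF assms(3)] by simp
  show ?thesis unfolding act1_def[of y] unfolding act1_def
    using g1part_build1[OF z t] tail1_build1[OF t] assms g1part_closed by (simp add: G1.m_assoc)
qed

lemma act1_one: "w \<in> WS \<Longrightarrow> act1 \<one>\<^bsub>G1\<^esub> w = w"
  unfolding act1_def using build1_g1part g1part_closed by simp

lemma act1_H: assumes "h \<in> carrier H" "(h', t) \<in> WS"
  shows "act1 (\<phi>1 h) (h', t) = (h \<otimes>\<^bsub>H\<^esub> h', t)"
proof -
  have h': "h' \<in> carrier H" and rt: "red t" using assms unfolding WS_def by auto
  have hh: "h \<otimes>\<^bsub>H\<^esub> h' \<in> carrier H" using assms h' by simp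
  define z where "z = \<phi>1 h \<otimes>\<^bsub>G1\<^esub> g1part (h', t)"
  have az: "act1 (\<phi>1 h) (h', t) = build1 z (tail1 t)" unfolding act1_def z_def by simp
  show ?thesis
  proof (cases t rule: tail1.cases)
    case (1 c r)
    have c: "c \<in> carrier G1" "c \<notin> H1" "rep1 c = c" using rt 1 by (auto simp: red_def okz_def)
    have e: "z = \<phi>1 (h \<otimes>\<^bsub>H\<^esub> h') \<otimes>\<^bsub>G1\<^esub> c" unfolding z_def using 1 assms h' c
      by (simp add: G1.m_assoc)
    have z1: "z \<notin> H1" unfolding e using H1_mult_iff[OF hh c(1)] c(2) by simp
    have z2: "hp1 z = h \<otimes>\<^bsub>H\<^esub> h'" unfolding e using hp1_unique[OF hh c(1) c(3)] .
    have z3: "rep1 z = c" unfolding e using rep1_left[OF hh c(1)] c(3) by simp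
    show ?thesis unfolding az build1_def using z1 z2 z3 1 by simp
  next
    case ("2_1")
    have e: "z = \<phi>1 (h \<otimes>\<^bsub>H\<^esub> h')" unfolding z_def using "2_1" assms h' by simp
    show ?thesis unfolding az build1_def e using "2_1" hp1_H[OF hh] H1_closed[OF hh] by simp
  next
    case ("2_2" d r)
    have e: "z = \<phi>1 (h \<otimes>\<^bsub>H\<^esub> h')" unfolding z_def using "2_2" assms h' by simp
    show ?thesis unfolding az build1_def e using "2_2" hp1_H[OF hh] H1_closed[OF hh] by simp
  qed
qed

lemma act1_grow: assumes "x \<in> carrier G1" "x \<notin> H1" "(h, t) \<in> WS" "nL t"
  shows "\<exists>h' c. act1 x (h, t) = (h', Inl c # t)"
proof -
  have h: "h \<in> carrier H" using assms unfolding WS_def by auto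
  have g: "g1part (h, t) = \<phi>1 h" using assms(4) by (cases t rule: tail1.cases) auto
  have tt: "tail1 t = t" using assms(4) by (cases t rule: tail1.cases) auto
  have "x \<otimes>\<^bsub>G1\<^esub> \<phi>1 h \<notin> H1"
  proof
    assume a: "x \<otimes>\<^bsub>G1\<^esub> \<phi>1 h \<in> H1"
    have "x = (x \<otimes>\<^bsub>G1\<^esub> \<phi>1 h) \<otimes>\<^bsub>G1\<^esub> \<phi>1 (inv\<^bsub>H\<^esub> h)" using h assms(1)
      by (simp add: G1.m_assoc P1.hom_inv)
    moreover have "(x \<otimes>\<^bsub>G1\<^esub> \<phi>1 h) \<otimes>\<^bsub>G1\<^esub> \<phi>1 (inv\<^bsub>H\<^esub> h) \<in> H1"
    proof -
      from a obtain k where k: "k \<in> carrier H" "x \<otimes>\<^bsub>G1\<^esub> \<phi>1 h = \<phi>1 k" unfolding H1_def by auto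
      have "(x \<otimes>\<^bsub>G1\<^esub> \<phi>1 h) \<otimes>\<^bsub>G1\<^esub> \<phi>1 (inv\<^bsub>H\<^esub> h) = \<phi>1 (k \<otimes>\<^bsub>H\<^esub> inv\<^bsub>H\<^esub> h)"
        using k h by simp
      moreover have "k \<otimes>\<^bsub>H\<^esub> inv\<^bsub>H\<^esub> h \<in> carrier H" using k h by simp
      ultimately show ?thesis unfolding H1_def by blast
    qed
    ultimately show False using assms(2) by simp
  qed
  thus ?thesis unfolding act1_def build1_def using g tt by simp
qed

definition F1 :: "'a \<Rightarrow> ('h \<times> ('a + 'b) list \<Rightarrow> 'h \<times> ('a + 'b) list)" where
  "F1 x = restrict (act1 x) WS"

lemma F1_Bij: assumes "x \<in> carrier G1" shows "F1 x \<in> Bij WS"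
proof -
  have "bij_betw (act1 x) WS WS"
    by (rule bij_betw_byWitness[where f'="act1 (inv\<^bsub>G1\<^esub> x)"])
       (use assms act1_X act1_mult act1_one in \<open>auto simp: G1.l_inv G1.r_inv\<close>)
  hence "bij_betw (F1 x) WS WS" unfolding F1_def by (simp add: bij_betw_restrict_eq)
  thus ?thesis unfolding Bij_def F1_def by simp
qed

lemma F1_hom: "F1 \<in> hom G1 (BijGroup WS)"
proof (rule homI)
  fix x assume "x \<in> carrier G1" thus "F1 x \<in> carrier (BijGroup WS)" using F1_Bij by (simp add: BijGroup_def)
next
  fix x y assume xy: "x \<in> carrier G1" "y \<in> carrier G1"
  have "F1 (x \<otimes>\<^bsub>G1\<^esub> y) = compose WS (F1 x) (F1 y)"
    unfolding F1_def compose_def using act1_mult[OF xy] act1_X xy by (auto intro!: ext)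
  thus "F1 (x \<otimes>\<^bsub>G1\<^esub> y) = F1 x \<otimes>\<^bsub>BijGroup WS\<^esub> F1 y" using F1_Bij xy by (simp add: BijGroup_def)
qed
fun g2part :: "'h \<times> ('a + 'b) list \<Rightarrow> 'b" where
  "g2part (h, Inr c # r) = \<phi>2 h \<otimes>\<^bsub>G2\<^esub> c"
| "g2part (h, t) = \<phi>2 h"

fun tail2 :: "('a + 'b) list \<Rightarrow> ('a + 'b) list" where
  "tail2 (Inr c # r) = r"
| "tail2 t = t"

definition build2 :: "'b \<Rightarrow> ('a + 'b) list \<Rightarrow> 'h \<times> ('a + 'b) list" where
  "build2 z t = (hp2 z, if z \<in> H2 then t else Inr (rep2 z) # t)"

definition act2 :: "'b \<Rightarrow> 'h \<times> ('a + 'b) list \<Rightarrow> 'h \<times> ('a + 'b) list" where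
  "act2 x w = build2 (x \<otimes>\<^bsub>G2\<^esub> g2part w) (tail2 (snd w))"

lemma g2part_closed: "w \<in> WS \<Longrightarrow> g2part w \<in> carrier G2"
  by (cases w rule: g2part.cases) (auto simp: WS_def okz_def red_Inr)

lemma tail2_props: "w \<in> WS \<Longrightarrow> red (tail2 (snd w)) \<and> nR (tail2 (snd w))"
  by (cases "snd w" rule: tail2.cases) (auto simp: WS_def red_Inr)

lemma build2_X: assumes "z \<in> carrier G2" "red t" "nR t" shows "build2 z t \<in> WS"
proof (cases "z \<in> H2")
  case True thus ?thesis unfolding build2_def WS_def using assms hp2_props(1)[OF assms(1)] by simp
next
  case False
  have "okz (Inr (rep2 z))" unfolding okz_def
    using rep2_props(1)[OF assms(1)] rep2_notin[OF assms(1) False] rep2_idem[OF assms(1)] by simp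
  hence "red (Inr (rep2 z) # t)" using assms by (simp add: red_Inr)
  thus ?thesis unfolding build2_def WS_def using False hp2_props(1)[OF assms(1)] by simp
qed

lemma g2part_build2: "z \<in> carrier G2 \<Longrightarrow> nR t \<Longrightarrow> g2part (build2 z t) = z"
proof -
  assume a: "z \<in> carrier G2" "nR t"
  show ?thesis
  proof (cases "z \<in> H2")
    case True
    have "g2part (build2 z t) = \<phi>2 (hp2 z)" unfolding build2_def using True a(2)
      by (cases t rule: tail2.cases) auto
    also have "\<dots> = \<phi>2 (hp2 z) \<otimes>\<^bsub>G2\<^esub> rep2 z" using True hp2_props[OF a(1)] a(1) by (simp add: rep2_H)
    finally show ?thesis using hp2_props[OF a(1)] by simp
  next
    case False thus ?thesis unfolding build2_def using hp2_props[OF a(1)] by simp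
  qed
qed

lemma tail2_build2: "nR t \<Longrightarrow> tail2 (snd (build2 z t)) = t"
  unfolding build2_def by (cases t rule: tail2.cases) auto

lemma build2_g2part: assumes "w \<in> WS" shows "build2 (g2part w) (tail2 (snd w)) = w"
proof -
  obtain h t where w: "w = (h, t)" by (cases w)
  have h: "h \<in> carrier H" and rt: "red t" using assms w unfolding WS_def by auto
  show ?thesis
  proof (cases t rule: tail2.cases)
    case (1 c r)
    have c: "c \<in> carrier G2" "c \<notin> H2" "rep2 c = c" using rt 1 by (auto simp: red_def okz_def)
    have "\<phi>2 h \<otimes>\<^bsub>G2\<^esub> c \<notin> H2" using H2_mult_iff[OF h c(1)] c(2) by simp
    thus ?thesis unfolding build2_def w 1 using hp2_unique[OF h c(1) c(3)] rep2_left[OF h c(1)] c(3) by simp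
  next
    case ("2_1")
    thus ?thesis unfolding build2_def w using hp2_H[OF h] H2_closed[OF h] by simp
  next
    case ("2_2" d r)
    thus ?thesis unfolding build2_def w using hp2_H[OF h] H2_closed[OF h] by simp
  qed
qed

lemma act2_X: "x \<in> carrier G2 \<Longrightarrow> w \<in> WS \<Longrightarrow> act2 x w \<in> WS"
  unfolding act2_def using build2_X g2part_closed tail2_props by simp

lemma act2_mult: assumes "x \<in> carrier G2" "y \<in> carrier G2" "w \<in> WS"
  shows "act2 x (act2 y w) = act2 (x \<otimes>\<^bsub>G2\<^esub> y) w"
proof -
  have z: "y \<otimes>\<^bsub>G2\<^esub> g2part w \<in> carrier G2" using assms g2part_closed by simp
  have t: "nR (tail2 (snd w))" using tail2_props[OF assms(3)] by simp
  show ?thesis unfolding act2_def[of y] unfolding act2_def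
    using g2part_build2[OF z t] tail2_build2[OF t] assms g2part_closed by (simp add: G2.m_assoc)
qed

lemma act2_one: "w \<in> WS \<Longrightarrow> act2 \<one>\<^bsub>G2\<^esub> w = w"
  unfolding act2_def using build2_g2part g2part_closed by simp

lemma act2_H: assumes "h \<in> carrier H" "(h', t) \<in> WS"
  shows "act2 (\<phi>2 h) (h', t) = (h \<otimes>\<^bsub>H\<^esub> h', t)"
proof -
  have h': "h' \<in> carrier H" and rt: "red t" using assms unfolding WS_def by auto
  have hh: "h \<otimes>\<^bsub>H\<^esub> h' \<in> carrier H" using assms h' by simp
  define z where "z = \<phi>2 h \<otimes>\<^bsub>G2\<^esub> g2part (h', t)"
  have az: "act2 (\<phi>2 h) (h', t) = build2 z (tail2 t)" unfolding act2_def z_def by simp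
  show ?thesis
  proof (cases t rule: tail2.cases)
    case (1 c r)
    have c: "c \<in> carrier G2" "c \<notin> H2" "rep2 c = c" using rt 1 by (auto simp: red_def okz_def)
    have e: "z = \<phi>2 (h \<otimes>\<^bsub>H\<^esub> h') \<otimes>\<^bsub>G2\<^esub> c" unfolding z_def using 1 assms h' c
      by (simp add: G2.m_assoc)
    have z1: "z \<notin> H2" unfolding e using H2_mult_iff[OF hh c(1)] c(2) by simp
    have z2: "hp2 z = h \<otimes>\<^bsub>H\<^esub> h'" unfolding e using hp2_unique[OF hh c(1) c(3)] .
    have z3: "rep2 z = c" unfolding e using rep2_left[OF hh c(1)] c(3) by simp
    show ?thesis unfolding az build2_def using z1 z2 z3 1 by simp
  next
    case ("2_1")
    have e: "z = \<phi>2 (h \<otimes>\<^bsub>H\<^esub> h')" unfolding z_def using "2_1" assms h' by simp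
    show ?thesis unfolding az build2_def e using "2_1" hp2_H[OF hh] H2_closed[OF hh] by simp
  next
    case ("2_2" d r)
    have e: "z = \<phi>2 (h \<otimes>\<^bsub>H\<^esub> h')" unfolding z_def using "2_2" assms h' by simp
    show ?thesis unfolding az build2_def e using "2_2" hp2_H[OF hh] H2_closed[OF hh] by simp
  qed
qed

lemma act2_grow: assumes "x \<in> carrier G2" "x \<notin> H2" "(h, t) \<in> WS" "nR t"
  shows "\<exists>h' c. act2 x (h, t) = (h', Inr c # t)"
proof -
  have h: "h \<in> carrier H" using assms unfolding WS_def by auto
  have g: "g2part (h, t) = \<phi>2 h" using assms(4) by (cases t rule: tail2.cases) auto
  have tt: "tail2 t = t" using assms(4) by (cases t rule: tail2.cases) auto
  have "x \<otimes>\<^bsub>G2\<^esub> \<phi>2 h \<notin> H2"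
  proof
    assume a: "x \<otimes>\<^bsub>G2\<^esub> \<phi>2 h \<in> H2"
    have "x = (x \<otimes>\<^bsub>G2\<^esub> \<phi>2 h) \<otimes>\<^bsub>G2\<^esub> \<phi>2 (inv\<^bsub>H\<^esub> h)" using h assms(1)
      by (simp add: G2.m_assoc P2.hom_inv)
    moreover have "(x \<otimes>\<^bsub>G2\<^esub> \<phi>2 h) \<otimes>\<^bsub>G2\<^esub> \<phi>2 (inv\<^bsub>H\<^esub> h) \<in> H2"
    proof -
      from a obtain k where k: "k \<in> carrier H" "x \<otimes>\<^bsub>G2\<^esub> \<phi>2 h = \<phi>2 k" unfolding H2_def by auto
      have "(x \<otimes>\<^bsub>G2\<^esub> \<phi>2 h) \<otimes>\<^bsub>G2\<^esub> \<phi>2 (inv\<^bsub>H\<^esub> h) = \<phi>2 (k \<otimes>\<^bsub>H\<^esub> inv\<^bsub>H\<^esub> h)"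
        using k h by simp
      moreover have "k \<otimes>\<^bsub>H\<^esub> inv\<^bsub>H\<^esub> h \<in> carrier H" using k h by simp
      ultimately show ?thesis unfolding H2_def by blast
    qed
    ultimately show False using assms(2) by simp
  qed
  thus ?thesis unfolding act2_def build2_def using g tt by simp
qed

definition F2 :: "'b \<Rightarrow> ('h \<times> ('a + 'b) list \<Rightarrow> 'h \<times> ('a + 'b) list)" where
  "F2 x = restrict (act2 x) WS"

lemma F2_Bij: assumes "x \<in> carrier G2" shows "F2 x \<in> Bij WS"
proof -
  have "bij_betw (act2 x) WS WS"
    by (rule bij_betw_byWitness[where f'="act2 (inv\<^bsub>G2\<^esub> x)"])
       (use assms act2_X act2_mult act2_one in \<open>auto simp: G2.l_inv G2.r_inv\<close>)
  hence "bij_betw (F2 x) WS WS" unfolding F2_def by (simp add: bij_betw_restrict_eq)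
  thus ?thesis unfolding Bij_def F2_def by simp
qed

lemma F2_hom: "F2 \<in> hom G2 (BijGroup WS)"
proof (rule homI)
  fix x assume "x \<in> carrier G2" thus "F2 x \<in> carrier (BijGroup WS)" using F2_Bij by (simp add: BijGroup_def)
next
  fix x y assume xy: "x \<in> carrier G2" "y \<in> carrier G2"
  have "F2 (x \<otimes>\<^bsub>G2\<^esub> y) = compose WS (F2 x) (F2 y)"
    unfolding F2_def compose_def using act2_mult[OF xy] act2_X xy by (auto intro!: ext)
  thus "F2 (x \<otimes>\<^bsub>G2\<^esub> y) = F2 x \<otimes>\<^bsub>BijGroup WS\<^esub> F2 y" using F2_Bij xy by (simp add: BijGroup_def)
qed

end


locale amalgG = amalg G1 G2 H \<phi>1 \<phi>2 + GG: group G + I1: group_hom G1 G i1 + I2: group_hom G2 G i2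
  for G1 :: "('a, 'c) monoid_scheme" and G2 :: "('b, 'd) monoid_scheme" and H :: "('h, 'e) monoid_scheme"
    and \<phi>1 :: "'h \<Rightarrow> 'a" and \<phi>2 :: "'h \<Rightarrow> 'b"
    and G :: "('g, 'f) monoid_scheme" and i1 :: "'a \<Rightarrow> 'g" and i2 :: "'b \<Rightarrow> 'g" +
  fixes \<Phi> :: "'g \<Rightarrow> ('h \<times> ('a + 'b) list \<Rightarrow> 'h \<times> ('a + 'b) list)"
  assumes compat: "\<And>h. h \<in> carrier H \<Longrightarrow> i1 (\<phi>1 h) = i2 (\<phi>2 h)"
    and gen: "generate G (i1 ` carrier G1 \<union> i2 ` carrier G2) = carrier G"
    and \<Phi>_mult: "\<And>g g' w. g \<in> carrier G \<Longrightarrow> g' \<in> carrier G \<Longrightarrow> w \<in> WS \<Longrightarrow> \<Phi> (g \<otimes>\<^bsub>G\<^esub> g') w = \<Phi> g (\<Phi> g' w)"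
    and \<Phi>_WS: "\<And>g w. g \<in> carrier G \<Longrightarrow> w \<in> WS \<Longrightarrow> \<Phi> g w \<in> WS"
    and \<Phi>_one: "\<And>w. w \<in> WS \<Longrightarrow> \<Phi> \<one>\<^bsub>G\<^esub> w = w"
    and \<Phi>_i1: "\<And>x w. x \<in> carrier G1 \<Longrightarrow> w \<in> WS \<Longrightarrow> \<Phi> (i1 x) w = act1 x w"
    and \<Phi>_i2: "\<And>x w. x \<in> carrier G2 \<Longrightarrow> w \<in> WS \<Longrightarrow> \<Phi> (i2 x) w = act2 x w"
begin

definition \<iota> :: "'h \<Rightarrow> 'g" where "\<iota> h = i1 (\<phi>1 h)"

lemma iota1: "\<iota> h = i1 (\<phi>1 h)" by (simp add: \<iota>_def)
lemma iota2: "h \<in> carrier H \<Longrightarrow> \<iota> h = i2 (\<phi>2 h)" by (simp add: \<iota>_def compat)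
lemma iota_closed[simp]: "h \<in> carrier H \<Longrightarrow> \<iota> h \<in> carrier G" by (simp add: \<iota>_def)
lemma iota_mult: "h \<in> carrier H \<Longrightarrow> h' \<in> carrier H \<Longrightarrow> \<iota> (h \<otimes>\<^bsub>H\<^esub> h') = \<iota> h \<otimes>\<^bsub>G\<^esub> \<iota> h'"
  by (simp add: \<iota>_def)
lemma iota_one[simp]: "\<iota> \<one>\<^bsub>H\<^esub> = \<one>\<^bsub>G\<^esub>" by (simp add: \<iota>_def)
lemma iota_inv: "h \<in> carrier H \<Longrightarrow> \<iota> (inv\<^bsub>H\<^esub> h) = inv\<^bsub>G\<^esub> (\<iota> h)"
  by (simp add: \<iota>_def P1.hom_inv I1.hom_inv)

fun emb :: "'a + 'b \<Rightarrow> 'g" where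
  "emb (Inl c) = i1 c"
| "emb (Inr d) = i2 d"

fun lc :: "'a + 'b \<Rightarrow> bool" where
  "lc (Inl c) = (c \<in> carrier G1)"
| "lc (Inr d) = (d \<in> carrier G2)"

fun okg :: "'a + 'b \<Rightarrow> bool" where
  "okg (Inl c) = (c \<in> carrier G1 \<and> c \<notin> H1)"
| "okg (Inr d) = (d \<in> carrier G2 \<and> d \<notin> H2)"

definition galt :: "('a + 'b) list \<Rightarrow> bool" where
  "galt t = (alt t \<and> (\<forall>z\<in>set t. okg z))"

definition pw :: "('a + 'b) list \<Rightarrow> 'g" where
  "pw t = prodl G (map emb t)"

fun eval :: "'h \<times> ('a + 'b) list \<Rightarrow> 'g" where
  "eval (h, t) = \<iota> h \<otimes>\<^bsub>G\<^esub> pw t"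

lemma emb_closed: "lc z \<Longrightarrow> emb z \<in> carrier G"
  by (cases z) auto

lemma pw_closed: "\<forall>z\<in>set t. lc z \<Longrightarrow> pw t \<in> carrier G"
  unfolding pw_def by (rule GG.prodl_closed) (auto simp: emb_closed)

lemma pw_Nil[simp]: "pw [] = \<one>\<^bsub>G\<^esub>" by (simp add: pw_def)
lemma pw_Cons: "pw (z # t) = emb z \<otimes>\<^bsub>G\<^esub> pw t" by (simp add: pw_def)
lemma pw_append: "\<forall>z\<in>set t. lc z \<Longrightarrow> \<forall>z\<in>set t'. lc z \<Longrightarrow> pw (t @ t') = pw t \<otimes>\<^bsub>G\<^esub> pw t'"
  unfolding pw_def map_append by (rule GG.prodl_append) (auto simp: emb_closed)
lemma pw_single: "lc z \<Longrightarrow> pw [z] = emb z" by (simp add: pw_def emb_closed)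

lemma okz_lc: "okz z \<Longrightarrow> lc z" by (cases z) (auto simp: okz_def)
lemma okg_lc: "okg z \<Longrightarrow> lc z" by (cases z) auto
lemma okz_okg: "okz z \<Longrightarrow> okg z" by (cases z) (auto simp: okz_def)
lemma red_galt: "red t \<Longrightarrow> galt t" unfolding red_def galt_def using okz_okg by auto
lemma red_lc: "red t \<Longrightarrow> \<forall>z\<in>set t. lc z" unfolding red_def using okz_lc by auto
lemma galt_lc: "galt t \<Longrightarrow> \<forall>z\<in>set t. lc z" unfolding galt_def using okg_lc by auto

lemma eval_closed: "w \<in> WS \<Longrightarrow> eval w \<in> carrier G"
  by (cases w) (auto simp: WS_def intro!: pw_closed red_lc)

lemma galt_Cons: "galt (z # t) \<longleftrightarrow> okg z \<and> galt t \<and> (t \<noteq> [] \<longrightarrow> isl (hd t) \<noteq> isl z)"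
  unfolding galt_def alt_Cons by auto

lemma alt_snoc_same: "isl a = isl b \<Longrightarrow> alt (zs @ [a]) = alt (zs @ [b])"
proof (induction zs)
  case Nil thus ?case by simp
next
  case (Cons x zs) thus ?case by (cases zs) (auto simp: alt_Cons)
qed

lemma alt_snoc2: "alt (zs @ [a, b]) \<longleftrightarrow> alt (zs @ [a]) \<and> isl a \<noteq> isl b"
proof (induction zs)
  case Nil thus ?case by simp
next
  case (Cons x zs) thus ?case by (cases zs) (auto simp: alt_Cons)
qed

lemma alt_butlast: "alt (zs @ [a]) \<Longrightarrow> alt zs"
proof (induction zs)
  case Nil thus ?case by simp
next
  case (Cons x zs) thus ?case by (cases zs) (auto simp: alt_Cons)
qed

lemma H1_rmult_iff: "h \<in> carrier H \<Longrightarrow> y \<in> carrier G1 \<Longrightarrow> y \<otimes>\<^bsub>G1\<^esub> \<phi>1 h \<in> H1 \<longleftrightarrow> y \<in> H1"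
proof
  assume a: "h \<in> carrier H" "y \<in> carrier G1" "y \<otimes>\<^bsub>G1\<^esub> \<phi>1 h \<in> H1"
  then obtain k where k: "k \<in> carrier H" "y \<otimes>\<^bsub>G1\<^esub> \<phi>1 h = \<phi>1 k" unfolding H1_def by auto
  have "y = (y \<otimes>\<^bsub>G1\<^esub> \<phi>1 h) \<otimes>\<^bsub>G1\<^esub> \<phi>1 (inv\<^bsub>H\<^esub> h)" using a by (simp add: G1.m_assoc P1.hom_inv)
  also have "\<dots> = \<phi>1 (k \<otimes>\<^bsub>H\<^esub> inv\<^bsub>H\<^esub> h)" using k a by simp
  finally have "y = \<phi>1 (k \<otimes>\<^bsub>H\<^esub> inv\<^bsub>H\<^esub> h)" .
  moreover have "k \<otimes>\<^bsub>H\<^esub> inv\<^bsub>H\<^esub> h \<in> carrier H" using a k by simp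
  ultimately show "y \<in> H1" unfolding H1_def by blast
next
  assume a: "h \<in> carrier H" "y \<in> carrier G1" "y \<in> H1"
  then obtain k where k: "k \<in> carrier H" "y = \<phi>1 k" unfolding H1_def by auto
  have "y \<otimes>\<^bsub>G1\<^esub> \<phi>1 h = \<phi>1 (k \<otimes>\<^bsub>H\<^esub> h)" using k a by simp
  moreover have "k \<otimes>\<^bsub>H\<^esub> h \<in> carrier H" using a k by simp
  ultimately show "y \<otimes>\<^bsub>G1\<^esub> \<phi>1 h \<in> H1" unfolding H1_def by blast
qed

lemma H2_rmult_iff: "h \<in> carrier H \<Longrightarrow> y \<in> carrier G2 \<Longrightarrow> y \<otimes>\<^bsub>G2\<^esub> \<phi>2 h \<in> H2 \<longleftrightarrow> y \<in> H2"
proof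
  assume a: "h \<in> carrier H" "y \<in> carrier G2" "y \<otimes>\<^bsub>G2\<^esub> \<phi>2 h \<in> H2"
  then obtain k where k: "k \<in> carrier H" "y \<otimes>\<^bsub>G2\<^esub> \<phi>2 h = \<phi>2 k" unfolding H2_def by auto
  have "y = (y \<otimes>\<^bsub>G2\<^esub> \<phi>2 h) \<otimes>\<^bsub>G2\<^esub> \<phi>2 (inv\<^bsub>H\<^esub> h)" using a by (simp add: G2.m_assoc P2.hom_inv)
  also have "\<dots> = \<phi>2 (k \<otimes>\<^bsub>H\<^esub> inv\<^bsub>H\<^esub> h)" using k a by simp
  finally have "y = \<phi>2 (k \<otimes>\<^bsub>H\<^esub> inv\<^bsub>H\<^esub> h)" .
  moreover have "k \<otimes>\<^bsub>H\<^esub> inv\<^bsub>H\<^esub> h \<in> carrier H" using a k by simp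
  ultimately show "y \<in> H2" unfolding H2_def by blast
next
  assume a: "h \<in> carrier H" "y \<in> carrier G2" "y \<in> H2"
  then obtain k where k: "k \<in> carrier H" "y = \<phi>2 k" unfolding H2_def by auto
  have "y \<otimes>\<^bsub>G2\<^esub> \<phi>2 h = \<phi>2 (k \<otimes>\<^bsub>H\<^esub> h)" using k a by simp
  moreover have "k \<otimes>\<^bsub>H\<^esub> h \<in> carrier H" using a k by simp
  ultimately show "y \<otimes>\<^bsub>G2\<^esub> \<phi>2 h \<in> H2" unfolding H2_def by blast
qed

lemma eval_build1: assumes z: "z \<in> carrier G1" and t: "red t"
  shows "eval (build1 z t) = i1 z \<otimes>\<^bsub>G\<^esub> pw t"
proof -
  have hp: "hp1 z \<in> carrier H" "\<phi>1 (hp1 z) \<otimes>\<^bsub>G1\<^esub> rep1 z = z" using hp1_props[OF z] by auto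
  have rc: "rep1 z \<in> carrier G1" using rep1_props(1)[OF z] .
  have pc: "pw t \<in> carrier G" using pw_closed[OF red_lc[OF t]] .
  show ?thesis
  proof (cases "z \<in> H1")
    case True
    have e: "\<phi>1 (hp1 z) = z" using hp(2) rep1_H[OF True] hp(1) by simp
    have "eval (build1 z t) = \<iota> (hp1 z) \<otimes>\<^bsub>G\<^esub> pw t" using True unfolding build1_def by simp
    also have "\<dots> = i1 z \<otimes>\<^bsub>G\<^esub> pw t" using e hp(1) by (simp add: iota1)
    finally show ?thesis .
  next
    case False
    have "eval (build1 z t) = \<iota> (hp1 z) \<otimes>\<^bsub>G\<^esub> (i1 (rep1 z) \<otimes>\<^bsub>G\<^esub> pw t)"
      using False unfolding build1_def by (simp add: pw_Cons)
    also have "\<dots> = (i1 (\<phi>1 (hp1 z)) \<otimes>\<^bsub>G\<^esub> i1 (rep1 z)) \<otimes>\<^bsub>G\<^esub> pw t"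
      using hp rc pc by (simp add: iota1 GG.m_assoc)
    also have "\<dots> = i1 (\<phi>1 (hp1 z) \<otimes>\<^bsub>G1\<^esub> rep1 z) \<otimes>\<^bsub>G\<^esub> pw t" using hp(1) rc by simp
    also have "\<dots> = i1 z \<otimes>\<^bsub>G\<^esub> pw t" by (simp only: hp(2))
    finally show ?thesis .
  qed
qed

lemma eval_g1part: assumes w: "w \<in> WS"
  shows "eval w = i1 (g1part w) \<otimes>\<^bsub>G\<^esub> pw (tail1 (snd w))"
proof -
  have "eval w = eval (build1 (g1part w) (tail1 (snd w)))" using build1_g1part[OF w] by simp
  also have "\<dots> = i1 (g1part w) \<otimes>\<^bsub>G\<^esub> pw (tail1 (snd w))"
    by (rule eval_build1[OF g1part_closed[OF w]]) (use tail1_props[OF w] in simp)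
  finally show ?thesis .
qed

lemma eval_act1: assumes x: "x \<in> carrier G1" and w: "w \<in> WS"
  shows "eval (act1 x w) = i1 x \<otimes>\<^bsub>G\<^esub> eval w"
proof -
  have gc: "g1part w \<in> carrier G1" using g1part_closed[OF w] .
  have tp: "red (tail1 (snd w))" using tail1_props[OF w] by simp
  have pc: "pw (tail1 (snd w)) \<in> carrier G" using pw_closed[OF red_lc[OF tp]] .
  have "eval (act1 x w) = i1 (x \<otimes>\<^bsub>G1\<^esub> g1part w) \<otimes>\<^bsub>G\<^esub> pw (tail1 (snd w))"
    unfolding act1_def by (rule eval_build1) (use x gc tp in auto)
  also have "\<dots> = i1 x \<otimes>\<^bsub>G\<^esub> (i1 (g1part w) \<otimes>\<^bsub>G\<^esub> pw (tail1 (snd w)))"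
    using x gc pc by (simp add: GG.m_assoc)
  also have "\<dots> = i1 x \<otimes>\<^bsub>G\<^esub> eval w" using eval_g1part[OF w] by simp
  finally show ?thesis .
qed

lemma append1: assumes ys: "galt ys" "ys \<noteq> []" and y: "y \<in> carrier G1"
  shows "\<exists>h' ys'. h' \<in> carrier H \<and> galt ys' \<and> pw ys \<otimes>\<^bsub>G\<^esub> i1 y = \<iota> h' \<otimes>\<^bsub>G\<^esub> pw ys' \<and>
           (ys' \<noteq> [] \<longrightarrow> isl (hd ys') = isl (hd ys))"
proof -
  obtain zs lst where zl: "ys = zs @ [lst]" using ys(2) by (metis rev_exhaust)
  have gz: "\<forall>z\<in>set zs. okg z" "okg lst" "alt (zs @ [lst])" using ys(1) zl unfolding galt_def by auto
  have lz: "\<forall>z\<in>set zs. lc z" using gz(1) okg_lc by auto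
  have pzc: "pw zs \<in> carrier G" using pw_closed[OF lz] .
  show ?thesis
  proof (cases lst)
    case (Inl c)
    have c: "c \<in> carrier G1" "c \<notin> H1" using gz(2) Inl by auto
    define z where "z = c \<otimes>\<^bsub>G1\<^esub> y"
    have zc: "z \<in> carrier G1" using c y unfolding z_def by simp
    have e0: "pw ys \<otimes>\<^bsub>G\<^esub> i1 y = pw zs \<otimes>\<^bsub>G\<^esub> i1 z"
      using zl Inl c y pzc lz unfolding z_def by (simp add: pw_append pw_single GG.m_assoc)
    show ?thesis
    proof (cases "z \<in> H1")
      case False
      let ?ys' = "zs @ [Inl z]"
      have "galt ?ys'" unfolding galt_def using gz alt_snoc_same[of "Inl z" lst zs] Inl False zc by auto
      moreover have "pw ys \<otimes>\<^bsub>G\<^esub> i1 y = \<iota> \<one>\<^bsub>H\<^esub> \<otimes>\<^bsub>G\<^esub> pw ?ys'"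
        using e0 zc pzc lz by (simp add: pw_append pw_single)
      moreover have "isl (hd ?ys') = isl (hd ys)" using zl Inl by (cases zs) auto
      ultimately show ?thesis by blast
    next
      case True
      then obtain h2 where h2: "h2 \<in> carrier H" "z = \<phi>1 h2" unfolding H1_def by auto
      show ?thesis
      proof (cases zs rule: rev_exhaust)
        case Nil
        have "pw ys \<otimes>\<^bsub>G\<^esub> i1 y = \<iota> h2 \<otimes>\<^bsub>G\<^esub> pw []" using e0 Nil h2 by (simp add: iota1)
        moreover have "galt []" by (simp add: galt_def)
        ultimately show ?thesis using h2 by blast
      next
        case (snoc zs0 l2)
        have a2: "alt (zs0 @ [l2, lst])" using gz(3) snoc by simp
        hence "isl l2 \<noteq> isl lst" using alt_snoc2 by blast
        then obtain d where d: "l2 = Inr d" using Inl by (cases l2) auto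
        have dc: "d \<in> carrier G2" "d \<notin> H2" using gz(1) snoc d by auto
        define d' where "d' = d \<otimes>\<^bsub>G2\<^esub> \<phi>2 h2"
        have d'c: "d' \<in> carrier G2" "d' \<notin> H2" using dc h2 H2_rmult_iff[OF h2(1) dc(1)] unfolding d'_def by auto
        let ?ys' = "zs0 @ [Inr d']"
        have lz0: "\<forall>z\<in>set zs0. lc z" using lz snoc by auto
        have "alt (zs0 @ [l2])" using a2 alt_snoc2 by blast
        hence "galt ?ys'" unfolding galt_def using gz(1) snoc d d'c alt_snoc_same[of "Inr d'" l2 zs0] by auto
        moreover have "pw ys \<otimes>\<^bsub>G\<^esub> i1 y = \<iota> \<one>\<^bsub>H\<^esub> \<otimes>\<^bsub>G\<^esub> pw ?ys'"
        proof -
          have "pw ys \<otimes>\<^bsub>G\<^esub> i1 y = pw zs0 \<otimes>\<^bsub>G\<^esub> (i2 d \<otimes>\<^bsub>G\<^esub> i1 z)"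
            using e0 snoc d dc lz0 zc by (simp add: pw_append pw_single GG.m_assoc pw_closed)
          also have "i1 z = i2 (\<phi>2 h2)" using h2 compat by simp
          also have "i2 d \<otimes>\<^bsub>G\<^esub> i2 (\<phi>2 h2) = i2 d'" using dc h2 unfolding d'_def by simp
          finally show ?thesis using lz0 d'c by (simp add: pw_append pw_single pw_closed)
        qed
        moreover have "isl (hd ?ys') = isl (hd ys)" using zl snoc d by (cases zs0) auto
        ultimately show ?thesis by blast
      qed
    qed
  next
    case (Inr d)
    have dc: "d \<in> carrier G2" "d \<notin> H2" using gz(2) Inr by auto
    show ?thesis
    proof (cases "y \<in> H1")
      case False
      let ?ys' = "ys @ [Inl y]"
      have "alt ?ys'" using gz(3) zl Inr alt_snoc2[of zs lst "Inl y"] by simp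
      hence "galt ?ys'" using ys(1) y False unfolding galt_def by auto
      moreover have "pw ys \<otimes>\<^bsub>G\<^esub> i1 y = \<iota> \<one>\<^bsub>H\<^esub> \<otimes>\<^bsub>G\<^esub> pw ?ys'"
        using y galt_lc[OF ys(1)] pw_closed[OF galt_lc[OF ys(1)]] by (simp add: pw_append pw_single)
      moreover have "isl (hd ?ys') = isl (hd ys)" using ys(2) by (cases ys) auto
      ultimately show ?thesis by blast
    next
      case True
      then obtain h2 where h2: "h2 \<in> carrier H" "y = \<phi>1 h2" unfolding H1_def by auto
      define d' where "d' = d \<otimes>\<^bsub>G2\<^esub> \<phi>2 h2"
      have d'c: "d' \<in> carrier G2" "d' \<notin> H2" using dc h2 H2_rmult_iff[OF h2(1) dc(1)] unfolding d'_def by auto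
      let ?ys' = "zs @ [Inr d']"
      have "galt ?ys'" unfolding galt_def using gz Inr d'c alt_snoc_same[of "Inr d'" lst zs] by auto
      moreover have "pw ys \<otimes>\<^bsub>G\<^esub> i1 y = \<iota> \<one>\<^bsub>H\<^esub> \<otimes>\<^bsub>G\<^esub> pw ?ys'"
      proof -
        have "pw ys \<otimes>\<^bsub>G\<^esub> i1 y = pw zs \<otimes>\<^bsub>G\<^esub> (i2 d \<otimes>\<^bsub>G\<^esub> i1 y)"
          using zl Inr dc lz y by (simp add: pw_append pw_single GG.m_assoc pw_closed)
        also have "\<dots> = pw zs \<otimes>\<^bsub>G\<^esub> i2 d'" using dc h2 compat unfolding d'_def by simp
        finally show ?thesis using lz d'c by (simp add: pw_append pw_single pw_closed)
      qed
      moreover have "isl (hd ?ys') = isl (hd ys)" using zl Inr by (cases zs) auto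
      ultimately show ?thesis by blast
    qed
  qed
qed

lemma eval_build2: assumes z: "z \<in> carrier G2" and t: "red t"
  shows "eval (build2 z t) = i2 z \<otimes>\<^bsub>G\<^esub> pw t"
proof -
  have hp: "hp2 z \<in> carrier H" "\<phi>2 (hp2 z) \<otimes>\<^bsub>G2\<^esub> rep2 z = z" using hp2_props[OF z] by auto
  have rc: "rep2 z \<in> carrier G2" using rep2_props(1)[OF z] .
  have pc: "pw t \<in> carrier G" using pw_closed[OF red_lc[OF t]] .
  show ?thesis
  proof (cases "z \<in> H2")
    case True
    have e: "\<phi>2 (hp2 z) = z" using hp(2) rep2_H[OF True] hp(1) by simp
    have "eval (build2 z t) = \<iota> (hp2 z) \<otimes>\<^bsub>G\<^esub> pw t" using True unfolding build2_def by simp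
    also have "\<dots> = i2 z \<otimes>\<^bsub>G\<^esub> pw t" using e hp(1) by (simp add: iota2)
    finally show ?thesis .
  next
    case False
    have "eval (build2 z t) = \<iota> (hp2 z) \<otimes>\<^bsub>G\<^esub> (i2 (rep2 z) \<otimes>\<^bsub>G\<^esub> pw t)"
      using False unfolding build2_def by (simp add: pw_Cons)
    also have "\<dots> = (i2 (\<phi>2 (hp2 z)) \<otimes>\<^bsub>G\<^esub> i2 (rep2 z)) \<otimes>\<^bsub>G\<^esub> pw t"
      using hp rc pc by (simp add: iota2 GG.m_assoc)
    also have "\<dots> = i2 (\<phi>2 (hp2 z) \<otimes>\<^bsub>G2\<^esub> rep2 z) \<otimes>\<^bsub>G\<^esub> pw t" using hp(1) rc by simp
    also have "\<dots> = i2 z \<otimes>\<^bsub>G\<^esub> pw t" by (simp only: hp(2))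
    finally show ?thesis .
  qed
qed

lemma eval_g2part: assumes w: "w \<in> WS"
  shows "eval w = i2 (g2part w) \<otimes>\<^bsub>G\<^esub> pw (tail2 (snd w))"
proof -
  have "eval w = eval (build2 (g2part w) (tail2 (snd w)))" using build2_g2part[OF w] by simp
  also have "\<dots> = i2 (g2part w) \<otimes>\<^bsub>G\<^esub> pw (tail2 (snd w))"
    by (rule eval_build2[OF g2part_closed[OF w]]) (use tail2_props[OF w] in simp)
  finally show ?thesis .
qed

lemma eval_act2: assumes x: "x \<in> carrier G2" and w: "w \<in> WS"
  shows "eval (act2 x w) = i2 x \<otimes>\<^bsub>G\<^esub> eval w"
proof -
  have gc: "g2part w \<in> carrier G2" using g2part_closed[OF w] .
  have tp: "red (tail2 (snd w))" using tail2_props[OF w] by simp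
  have pc: "pw (tail2 (snd w)) \<in> carrier G" using pw_closed[OF red_lc[OF tp]] .
  have "eval (act2 x w) = i2 (x \<otimes>\<^bsub>G2\<^esub> g2part w) \<otimes>\<^bsub>G\<^esub> pw (tail2 (snd w))"
    unfolding act2_def by (rule eval_build2) (use x gc tp in auto)
  also have "\<dots> = i2 x \<otimes>\<^bsub>G\<^esub> (i2 (g2part w) \<otimes>\<^bsub>G\<^esub> pw (tail2 (snd w)))"
    using x gc pc by (simp add: GG.m_assoc)
  also have "\<dots> = i2 x \<otimes>\<^bsub>G\<^esub> eval w" using eval_g2part[OF w] by simp
  finally show ?thesis .
qed

lemma append2: assumes ys: "galt ys" "ys \<noteq> []" and y: "y \<in> carrier G2"
  shows "\<exists>h' ys'. h' \<in> carrier H \<and> galt ys' \<and> pw ys \<otimes>\<^bsub>G\<^esub> i2 y = \<iota> h' \<otimes>\<^bsub>G\<^esub> pw ys' \<and>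
           (ys' \<noteq> [] \<longrightarrow> isl (hd ys') = isl (hd ys))"
proof -
  obtain zs lst where zl: "ys = zs @ [lst]" using ys(2) by (metis rev_exhaust)
  have gz: "\<forall>z\<in>set zs. okg z" "okg lst" "alt (zs @ [lst])" using ys(1) zl unfolding galt_def by auto
  have lz: "\<forall>z\<in>set zs. lc z" using gz(1) okg_lc by auto
  have pzc: "pw zs \<in> carrier G" using pw_closed[OF lz] .
  show ?thesis
  proof (cases lst)
    case (Inr c)
    have c: "c \<in> carrier G2" "c \<notin> H2" using gz(2) Inr by auto
    define z where "z = c \<otimes>\<^bsub>G2\<^esub> y"
    have zc: "z \<in> carrier G2" using c y unfolding z_def by simp
    have e0: "pw ys \<otimes>\<^bsub>G\<^esub> i2 y = pw zs \<otimes>\<^bsub>G\<^esub> i2 z"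
      using zl Inr c y pzc lz unfolding z_def by (simp add: pw_append pw_single GG.m_assoc)
    show ?thesis
    proof (cases "z \<in> H2")
      case False
      let ?ys' = "zs @ [Inr z]"
      have "galt ?ys'" unfolding galt_def using gz alt_snoc_same[of "Inr z" lst zs] Inr False zc by auto
      moreover have "pw ys \<otimes>\<^bsub>G\<^esub> i2 y = \<iota> \<one>\<^bsub>H\<^esub> \<otimes>\<^bsub>G\<^esub> pw ?ys'"
        using e0 zc pzc lz by (simp add: pw_append pw_single)
      moreover have "isl (hd ?ys') = isl (hd ys)" using zl Inr by (cases zs) auto
      ultimately show ?thesis by blast
    next
      case True
      then obtain h2 where h2: "h2 \<in> carrier H" "z = \<phi>2 h2" unfolding H2_def by auto
      show ?thesis
      proof (cases zs rule: rev_exhaust)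
        case Nil
        have "pw ys \<otimes>\<^bsub>G\<^esub> i2 y = \<iota> h2 \<otimes>\<^bsub>G\<^esub> pw []" using e0 Nil h2 by (simp add: iota2)
        moreover have "galt []" by (simp add: galt_def)
        ultimately show ?thesis using h2 by blast
      next
        case (snoc zs0 l2)
        have a2: "alt (zs0 @ [l2, lst])" using gz(3) snoc by simp
        hence "isl l2 \<noteq> isl lst" using alt_snoc2 by blast
        then obtain d where d: "l2 = Inl d" using Inr by (cases l2) auto
        have dc: "d \<in> carrier G1" "d \<notin> H1" using gz(1) snoc d by auto
        define d' where "d' = d \<otimes>\<^bsub>G1\<^esub> \<phi>1 h2"
        have d'c: "d' \<in> carrier G1" "d' \<notin> H1" using dc h2 H1_rmult_iff[OF h2(1) dc(1)] unfolding d'_def by auto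
        let ?ys' = "zs0 @ [Inl d']"
        have lz0: "\<forall>z\<in>set zs0. lc z" using lz snoc by auto
        have "alt (zs0 @ [l2])" using a2 alt_snoc2 by blast
        hence "galt ?ys'" unfolding galt_def using gz(1) snoc d d'c alt_snoc_same[of "Inl d'" l2 zs0] by auto
        moreover have "pw ys \<otimes>\<^bsub>G\<^esub> i2 y = \<iota> \<one>\<^bsub>H\<^esub> \<otimes>\<^bsub>G\<^esub> pw ?ys'"
        proof -
          have "pw ys \<otimes>\<^bsub>G\<^esub> i2 y = pw zs0 \<otimes>\<^bsub>G\<^esub> (i1 d \<otimes>\<^bsub>G\<^esub> i2 z)"
            using e0 snoc d dc lz0 zc by (simp add: pw_append pw_single GG.m_assoc pw_closed)
          also have "i2 z = i1 (\<phi>1 h2)" using h2 compat[symmetric] by simp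
          also have "i1 d \<otimes>\<^bsub>G\<^esub> i1 (\<phi>1 h2) = i1 d'" using dc h2 unfolding d'_def by simp
          finally show ?thesis using lz0 d'c by (simp add: pw_append pw_single pw_closed)
        qed
        moreover have "isl (hd ?ys') = isl (hd ys)" using zl snoc d by (cases zs0) auto
        ultimately show ?thesis by blast
      qed
    qed
  next
    case (Inl d)
    have dc: "d \<in> carrier G1" "d \<notin> H1" using gz(2) Inl by auto
    show ?thesis
    proof (cases "y \<in> H2")
      case False
      let ?ys' = "ys @ [Inr y]"
      have "alt ?ys'" using gz(3) zl Inl alt_snoc2[of zs lst "Inr y"] by simp
      hence "galt ?ys'" using ys(1) y False unfolding galt_def by auto
      moreover have "pw ys \<otimes>\<^bsub>G\<^esub> i2 y = \<iota> \<one>\<^bsub>H\<^esub> \<otimes>\<^bsub>G\<^esub> pw ?ys'"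
        using y galt_lc[OF ys(1)] pw_closed[OF galt_lc[OF ys(1)]] by (simp add: pw_append pw_single)
      moreover have "isl (hd ?ys') = isl (hd ys)" using ys(2) by (cases ys) auto
      ultimately show ?thesis by blast
    next
      case True
      then obtain h2 where h2: "h2 \<in> carrier H" "y = \<phi>2 h2" unfolding H2_def by auto
      define d' where "d' = d \<otimes>\<^bsub>G1\<^esub> \<phi>1 h2"
      have d'c: "d' \<in> carrier G1" "d' \<notin> H1" using dc h2 H1_rmult_iff[OF h2(1) dc(1)] unfolding d'_def by auto
      let ?ys' = "zs @ [Inl d']"
      have "galt ?ys'" unfolding galt_def using gz Inl d'c alt_snoc_same[of "Inl d'" lst zs] by auto
      moreover have "pw ys \<otimes>\<^bsub>G\<^esub> i2 y = \<iota> \<one>\<^bsub>H\<^esub> \<otimes>\<^bsub>G\<^esub> pw ?ys'"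
      proof -
        have "pw ys \<otimes>\<^bsub>G\<^esub> i2 y = pw zs \<otimes>\<^bsub>G\<^esub> (i1 d \<otimes>\<^bsub>G\<^esub> i2 y)"
          using zl Inl dc lz y by (simp add: pw_append pw_single GG.m_assoc pw_closed)
        also have "\<dots> = pw zs \<otimes>\<^bsub>G\<^esub> i1 d'" using dc h2 compat unfolding d'_def by simp
        finally show ?thesis using lz d'c by (simp add: pw_append pw_single pw_closed)
      qed
      moreover have "isl (hd ?ys') = isl (hd ys)" using zl Inl by (cases zs) auto
      ultimately show ?thesis by blast
    qed
  qed
qed

lemma gen_carrier: "i1 ` carrier G1 \<union> i2 ` carrier G2 \<subseteq> carrier G" by auto

lemma \<Phi>_eval: assumes g: "g \<in> carrier G" shows "w \<in> WS \<Longrightarrow> eval (\<Phi> g w) = g \<otimes>\<^bsub>G\<^esub> eval w"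
proof -
  have "g \<in> generate G (i1 ` carrier G1 \<union> i2 ` carrier G2)" using gen g by simp
  thus "w \<in> WS \<Longrightarrow> eval (\<Phi> g w) = g \<otimes>\<^bsub>G\<^esub> eval w"
  proof (induction arbitrary: w rule: generate.induct)
    case one thus ?case using \<Phi>_one eval_closed by simp
  next
    case (incl h w)
    then consider x where "x \<in> carrier G1" "h = i1 x" | x where "x \<in> carrier G2" "h = i2 x" by blast
    thus ?case
    proof cases
      case 1 thus ?thesis using incl.prems \<Phi>_i1 eval_act1 by simp
    next
      case 2 thus ?thesis using incl.prems \<Phi>_i2 eval_act2 by simp
    qed
  next
    case (inv h w)
    then consider x where "x \<in> carrier G1" "h = i1 x" | x where "x \<in> carrier G2" "h = i2 x" by blast
    thus ?case
    proof cases
      case 1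
      hence e: "inv\<^bsub>G\<^esub> h = i1 (inv\<^bsub>G1\<^esub> x)" by (simp add: I1.hom_inv)
      have ix: "inv\<^bsub>G1\<^esub> x \<in> carrier G1" using 1 by simp
      have a: "\<Phi> (i1 (inv\<^bsub>G1\<^esub> x)) w = act1 (inv\<^bsub>G1\<^esub> x) w" by (rule \<Phi>_i1[OF ix inv.prems])
      have b: "eval (act1 (inv\<^bsub>G1\<^esub> x) w) = i1 (inv\<^bsub>G1\<^esub> x) \<otimes>\<^bsub>G\<^esub> eval w" by (rule eval_act1[OF ix inv.prems])
      show ?thesis unfolding e by (simp only: a b)
    next
      case 2
      hence e: "inv\<^bsub>G\<^esub> h = i2 (inv\<^bsub>G2\<^esub> x)" by (simp add: I2.hom_inv)
      have ix: "inv\<^bsub>G2\<^esub> x \<in> carrier G2" using 2 by simp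
      have a: "\<Phi> (i2 (inv\<^bsub>G2\<^esub> x)) w = act2 (inv\<^bsub>G2\<^esub> x) w" by (rule \<Phi>_i2[OF ix inv.prems])
      have b: "eval (act2 (inv\<^bsub>G2\<^esub> x) w) = i2 (inv\<^bsub>G2\<^esub> x) \<otimes>\<^bsub>G\<^esub> eval w" by (rule eval_act2[OF ix inv.prems])
      show ?thesis unfolding e by (simp only: a b)
    qed
  next
    case (eng h1 h2 w)
    have c: "h1 \<in> carrier G" "h2 \<in> carrier G"
      using eng.hyps GG.generate_in_carrier[OF gen_carrier] by auto
    have "eval (\<Phi> (h1 \<otimes>\<^bsub>G\<^esub> h2) w) = eval (\<Phi> h1 (\<Phi> h2 w))" using \<Phi>_mult c eng.prems by simp
    also have "\<dots> = h1 \<otimes>\<^bsub>G\<^esub> eval (\<Phi> h2 w)" using eng.IH(1) \<Phi>_WS c eng.prems by simp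
    also have "\<dots> = h1 \<otimes>\<^bsub>G\<^esub> (h2 \<otimes>\<^bsub>G\<^esub> eval w)" using eng.IH(2) eng.prems by simp
    finally show ?case using c eval_closed[OF eng.prems] by (simp add: GG.m_assoc)
  qed
qed

definition x0 :: "'h \<times> ('a + 'b) list" where "x0 = (\<one>\<^bsub>H\<^esub>, [])"

lemma x0_WS: "x0 \<in> WS" unfolding x0_def WS_def by simp
lemma eval_x0: "eval x0 = \<one>\<^bsub>G\<^esub>" unfolding x0_def by simp

definition N :: "'g \<Rightarrow> 'h \<times> ('a + 'b) list" where "N g = \<Phi> g x0"

lemma N_WS: "g \<in> carrier G \<Longrightarrow> N g \<in> WS" unfolding N_def using \<Phi>_WS x0_WS by simp
lemma N_eval: "g \<in> carrier G \<Longrightarrow> eval (N g) = g" unfolding N_def using \<Phi>_eval x0_WS eval_x0 by simp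

lemma N_iota: assumes "h \<in> carrier H" shows "N (\<iota> h) = (h, [])"
proof -
  have "N (\<iota> h) = act1 (\<phi>1 h) (\<one>\<^bsub>H\<^esub>, [])" unfolding N_def iota1 x0_def using \<Phi>_i1 x0_WS assms
    by (simp add: x0_def)
  also have "\<dots> = (h, [])" using act1_H[OF assms, of "\<one>\<^bsub>H\<^esub>" "[]"] x0_WS assms by (simp add: x0_def)
  finally show ?thesis .
qed

lemma iota_inj: "inj_on \<iota> (carrier H)"
proof (rule inj_onI)
  fix h h' assume "h \<in> carrier H" "h' \<in> carrier H" "\<iota> h = \<iota> h'"
  thus "h = h'" using N_iota by (metis prod.inject)
qed

lemma N_nil: assumes "g \<in> carrier G" "snd (N g) = []"
  shows "fst (N g) \<in> carrier H" "g = \<iota> (fst (N g))"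
proof -
  obtain h t where ht: "N g = (h, t)" by (cases "N g")
  have "h \<in> carrier H" using N_WS[OF assms(1)] ht unfolding WS_def by auto
  moreover have "g = \<iota> h" using N_eval[OF assms(1)] ht assms(2) \<open>h \<in> carrier H\<close> by simp
  ultimately show "fst (N g) \<in> carrier H" "g = \<iota> (fst (N g))" using ht by auto
qed

lemma grow: "galt ys \<Longrightarrow> \<Phi> (pw ys) x0 \<in> WS \<and> length (snd (\<Phi> (pw ys) x0)) = length ys \<and>
   (ys \<noteq> [] \<longrightarrow> isl (hd (snd (\<Phi> (pw ys) x0))) = isl (hd ys))"
proof (induction ys)
  case Nil thus ?case using \<Phi>_one x0_WS by (simp add: x0_def)
next
  case (Cons y ys)
  have gy: "okg y" "galt ys" "ys \<noteq> [] \<longrightarrow> isl (hd ys) \<noteq> isl y" using Cons.prems galt_Cons by auto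
  obtain h t where ht: "\<Phi> (pw ys) x0 = (h, t)" by (cases "\<Phi> (pw ys) x0")
  have IH: "(h, t) \<in> WS" "length t = length ys" "ys \<noteq> [] \<longrightarrow> isl (hd t) = isl (hd ys)"
    using Cons.IH[OF gy(2)] ht by auto
  have pc: "pw ys \<in> carrier G" using pw_closed[OF galt_lc[OF gy(2)]] .
  have ec: "emb y \<in> carrier G" using emb_closed[OF okg_lc[OF gy(1)]] .
  have e: "\<Phi> (pw (y # ys)) x0 = \<Phi> (emb y) (h, t)" unfolding pw_Cons using \<Phi>_mult[OF ec pc x0_WS] ht by simp
  show ?case
  proof (cases y)
    case (Inl c)
    have c: "c \<in> carrier G1" "c \<notin> H1" using gy(1) Inl by auto
    have "nL t"
    proof (cases "ys = []")
      case True thus ?thesis using IH(2) by simp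
    next
      case False
      hence "t \<noteq> []" using IH(2) by auto
      thus ?thesis unfolding nL_iff using IH(3) gy(3) False Inl by auto
    qed
    then obtain h' c' where a: "act1 c (h, t) = (h', Inl c' # t)" using act1_grow[OF c IH(1)] by blast
    have "\<Phi> (pw (y # ys)) x0 = (h', Inl c' # t)" using e Inl \<Phi>_i1[OF c(1) IH(1)] a by simp
    moreover have "(h', Inl c' # t) \<in> WS" using act1_X[OF c(1) IH(1)] a by simp
    ultimately show ?thesis using IH Inl by simp
  next
    case (Inr c)
    have c: "c \<in> carrier G2" "c \<notin> H2" using gy(1) Inr by auto
    have "nR t"
    proof (cases "ys = []")
      case True thus ?thesis using IH(2) by simp
    next
      case False
      hence "t \<noteq> []" using IH(2) by auto
      thus ?thesis unfolding nR_iff using IH(3) gy(3) False Inr by auto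
    qed
    then obtain h' c' where a: "act2 c (h, t) = (h', Inr c' # t)" using act2_grow[OF c IH(1)] by blast
    have "\<Phi> (pw (y # ys)) x0 = (h', Inr c' # t)" using e Inr \<Phi>_i2[OF c(1) IH(1)] a by simp
    moreover have "(h', Inr c' # t) \<in> WS" using act2_X[OF c(1) IH(1)] a by simp
    ultimately show ?thesis using IH Inr by simp
  qed
qed

lemma L1: assumes ys: "galt ys" and h: "h \<in> carrier H"
  shows "length (snd (N (\<iota> h \<otimes>\<^bsub>G\<^esub> pw ys))) = length ys"
    "ys \<noteq> [] \<Longrightarrow> isl (hd (snd (N (\<iota> h \<otimes>\<^bsub>G\<^esub> pw ys)))) = isl (hd ys)"
proof -
  obtain h'' t where ht: "\<Phi> (pw ys) x0 = (h'', t)" by (cases "\<Phi> (pw ys) x0")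
  have g: "(h'', t) \<in> WS" "length t = length ys" "ys \<noteq> [] \<longrightarrow> isl (hd t) = isl (hd ys)"
    using grow[OF ys] ht by auto
  have pc: "pw ys \<in> carrier G" using pw_closed[OF galt_lc[OF ys]] .
  have "N (\<iota> h \<otimes>\<^bsub>G\<^esub> pw ys) = \<Phi> (\<iota> h) (h'', t)" unfolding N_def using \<Phi>_mult[OF iota_closed[OF h] pc x0_WS] ht by simp
  also have "\<dots> = act1 (\<phi>1 h) (h'', t)" unfolding iota1 using \<Phi>_i1 g(1) h by simp
  also have "\<dots> = (h \<otimes>\<^bsub>H\<^esub> h'', t)" using act1_H[OF h g(1)] .
  finally have "N (\<iota> h \<otimes>\<^bsub>G\<^esub> pw ys) = (h \<otimes>\<^bsub>H\<^esub> h'', t)" .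
  thus "length (snd (N (\<iota> h \<otimes>\<^bsub>G\<^esub> pw ys))) = length ys"
    "ys \<noteq> [] \<Longrightarrow> isl (hd (snd (N (\<iota> h \<otimes>\<^bsub>G\<^esub> pw ys)))) = isl (hd ys)" using g by auto
qed

lemma side_step: assumes g: "g \<in> carrier G" and s: "s \<in> i1 ` carrier G1 \<union> i2 ` carrier G2"
    and ne: "snd (N g) \<noteq> []" "snd (N (g \<otimes>\<^bsub>G\<^esub> s)) \<noteq> []"
  shows "isl (hd (snd (N (g \<otimes>\<^bsub>G\<^esub> s)))) = isl (hd (snd (N g)))"
proof -
  obtain h t where ht: "N g = (h, t)" by (cases "N g")
  have hc: "h \<in> carrier H" and rt: "red t" using N_WS[OF g] ht unfolding WS_def by auto
  have gt: "galt t" using red_galt[OF rt] .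
  have tne: "t \<noteq> []" using ne(1) ht by simp
  have geq: "g = \<iota> h \<otimes>\<^bsub>G\<^esub> pw t" using N_eval[OF g] ht by simp
  have pc: "pw t \<in> carrier G" using pw_closed[OF galt_lc[OF gt]] .
  have "\<exists>h' ys'. h' \<in> carrier H \<and> galt ys' \<and> pw t \<otimes>\<^bsub>G\<^esub> s = \<iota> h' \<otimes>\<^bsub>G\<^esub> pw ys' \<and>
           (ys' \<noteq> [] \<longrightarrow> isl (hd ys') = isl (hd t))"
    using s append1[OF gt tne] append2[OF gt tne] by blast
  then obtain h' ys' where hy: "h' \<in> carrier H" "galt ys'" "pw t \<otimes>\<^bsub>G\<^esub> s = \<iota> h' \<otimes>\<^bsub>G\<^esub> pw ys'"
    "ys' \<noteq> [] \<longrightarrow> isl (hd ys') = isl (hd t)" by blast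
  have sc: "s \<in> carrier G" using s by auto
  have pc': "pw ys' \<in> carrier G" using pw_closed[OF galt_lc[OF hy(2)]] .
  have "g \<otimes>\<^bsub>G\<^esub> s = \<iota> h \<otimes>\<^bsub>G\<^esub> (pw t \<otimes>\<^bsub>G\<^esub> s)" using geq hc pc sc by (simp add: GG.m_assoc)
  also have "\<dots> = \<iota> (h \<otimes>\<^bsub>H\<^esub> h') \<otimes>\<^bsub>G\<^esub> pw ys'" using hy(3) hc hy(1) pc' by (simp add: iota_mult GG.m_assoc)
  finally have e: "g \<otimes>\<^bsub>G\<^esub> s = \<iota> (h \<otimes>\<^bsub>H\<^esub> h') \<otimes>\<^bsub>G\<^esub> pw ys'" .
  have hh: "h \<otimes>\<^bsub>H\<^esub> h' \<in> carrier H" using hc hy(1) by simp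
  have "ys' \<noteq> []" using L1(1)[OF hy(2) hh] ne(2) e by auto
  thus ?thesis using L1(2)[OF hy(2) hh] e hy(4) ht by simp
qed

end


definition natK :: "'a set \<Rightarrow> ('a \<Rightarrow> nat) \<Rightarrow> (nat \<Rightarrow> 'a) \<Rightarrow> ('a \<Rightarrow> 'a \<Rightarrow> 'a) \<Rightarrow> 'a \<Rightarrow> nat monoid" where
  "natK C e d m u = \<lparr>carrier = e ` C, Group.monoid.mult = (\<lambda>a b. e (m (d a) (d b))), Group.monoid.one = e u\<rparr>"

lemma natK_simps: "carrier (natK C e d m u) = e ` C" "Group.monoid.mult (natK C e d m u) = (\<lambda>a b. e (m (d a) (d b)))"
  "Group.monoid.one (natK C e d m u) = e u"
  by (simp_all add: natK_def)

lemma nat_transport: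
  assumes grp: "group K'" and cnt: "countable (carrier K')"
  shows "\<exists>(K::nat monoid) e d. group K \<and> e \<in> hom K' K \<and> (\<forall>x\<in>carrier K'. d (e x) = x) \<and>
     (\<forall>n\<in>carrier K. d n \<in> carrier K') \<and>
     (\<forall>a\<in>carrier K. \<forall>b\<in>carrier K. d (a \<otimes>\<^bsub>K\<^esub> b) = d a \<otimes>\<^bsub>K'\<^esub> d b)"
proof -
  interpret K': group K' by (rule grp)
  define C where "C = carrier K'"
  define e where "e = to_nat_on C"
  define d where "d = from_nat_into C"
  have de: "d (e x) = x" if "x \<in> C" for x unfolding d_def e_def using cnt that C_def by simp
  define K :: "nat monoid" where "K = natK C e d (Group.monoid.mult K') \<one>\<^bsub>K'\<^esub>"
  have dC: "d n \<in> C" if "n \<in> e ` C" for n using that de by auto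
  have cK: "carrier K = e ` C" and mK: "\<And>a b. a \<otimes>\<^bsub>K\<^esub> b = e (d a \<otimes>\<^bsub>K'\<^esub> d b)" and oK: "\<one>\<^bsub>K\<^esub> = e \<one>\<^bsub>K'\<^esub>"
    unfolding K_def natK_simps by simp_all
  have "group K"
  proof (rule groupI)
    fix x y assume "x \<in> carrier K" "y \<in> carrier K"
    thus "x \<otimes>\<^bsub>K\<^esub> y \<in> carrier K" unfolding cK mK using dC C_def by auto
  next
    show "\<one>\<^bsub>K\<^esub> \<in> carrier K" unfolding cK oK C_def by simp
  next
    fix x y z assume a: "x \<in> carrier K" "y \<in> carrier K" "z \<in> carrier K"
    hence c: "d x \<in> C" "d y \<in> C" "d z \<in> C" using dC cK by auto
    show "x \<otimes>\<^bsub>K\<^esub> y \<otimes>\<^bsub>K\<^esub> z = x \<otimes>\<^bsub>K\<^esub> (y \<otimes>\<^bsub>K\<^esub> z)" unfolding mK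
      using c de C_def by (simp add: K'.m_assoc)
  next
    fix x assume a: "x \<in> carrier K"
    then obtain x' where x': "x' \<in> C" "x = e x'" using cK by auto
    show "\<one>\<^bsub>K\<^esub> \<otimes>\<^bsub>K\<^esub> x = x" unfolding mK oK using x' de C_def by simp
  next
    fix x assume a: "x \<in> carrier K"
    then obtain x' where x': "x' \<in> C" "x = e x'" using cK by auto
    have "e (inv\<^bsub>K'\<^esub> x') \<in> carrier K" using x' cK C_def by simp
    moreover have "e (inv\<^bsub>K'\<^esub> x') \<otimes>\<^bsub>K\<^esub> x = \<one>\<^bsub>K\<^esub>" unfolding mK oK using x' de C_def by simp
    ultimately show "\<exists>y\<in>carrier K. y \<otimes>\<^bsub>K\<^esub> x = \<one>\<^bsub>K\<^esub>" by blast
  qed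
  moreover have "e \<in> hom K' K"
    by (rule homI) (use de C_def cK mK in auto)
  moreover have "\<forall>x\<in>carrier K'. d (e x) = x" using de C_def by simp
  moreover have "\<forall>n\<in>carrier K. d n \<in> carrier K'" using dC cK C_def by simp
  moreover have "\<forall>a\<in>carrier K. \<forall>b\<in>carrier K. d (a \<otimes>\<^bsub>K\<^esub> b) = d a \<otimes>\<^bsub>K'\<^esub> d b"
    using dC cK mK de C_def by simp
  ultimately show ?thesis by blast
qed

context amalg
begin

lemma F_compat: assumes "h \<in> carrier H" shows "F1 (\<phi>1 h) = F2 (\<phi>2 h)"
proof
  fix w show "F1 (\<phi>1 h) w = F2 (\<phi>2 h) w"
  proof (cases "w \<in> WS")
    case True
    obtain h' t where w: "w = (h', t)" by (cases w)
    show ?thesis unfolding F1_def F2_def using True act1_H[OF assms, of h' t] act2_H[OF assms, of h' t] w by simp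
  next
    case False thus ?thesis unfolding F1_def F2_def by simp
  qed
qed

lemma construct_Phi:
  fixes G :: "('g, 'f) monoid_scheme" and i1 :: "'a \<Rightarrow> 'g" and i2 :: "'b \<Rightarrow> 'g"
  assumes gG: "group G"
    and univ: "\<forall>(K :: nat monoid) f1 f2.
        group K \<and> f1 \<in> hom G1 K \<and> f2 \<in> hom G2 K \<and>
        (\<forall>h\<in>carrier H. f1 (\<phi>1 h) = f2 (\<phi>2 h)) \<longrightarrow>
        (\<exists>f \<in> hom G K. (\<forall>x\<in>carrier G1. f (i1 x) = f1 x) \<and> (\<forall>x\<in>carrier G2. f (i2 x) = f2 x))"
    and cnt: "countable (carrier G1)" "countable (carrier G2)"
  shows "\<exists>\<Phi>. (\<forall>g g' w. g \<in> carrier G \<longrightarrow> g' \<in> carrier G \<longrightarrow> w \<in> WS \<longrightarrow> \<Phi> (g \<otimes>\<^bsub>G\<^esub> g') w = \<Phi> g (\<Phi> g' w)) \<and>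
     (\<forall>g w. g \<in> carrier G \<longrightarrow> w \<in> WS \<longrightarrow> \<Phi> g w \<in> WS) \<and>
     (\<forall>w. w \<in> WS \<longrightarrow> \<Phi> \<one>\<^bsub>G\<^esub> w = w) \<and>
     (\<forall>x w. x \<in> carrier G1 \<longrightarrow> w \<in> WS \<longrightarrow> \<Phi> (i1 x) w = act1 x w) \<and>
     (\<forall>x w. x \<in> carrier G2 \<longrightarrow> w \<in> WS \<longrightarrow> \<Phi> (i2 x) w = act2 x w)"
proof -
  interpret GG: group G by (rule gG)
  define B where "B = BijGroup WS"
  interpret B: group B unfolding B_def by (rule group_BijGroup)
  define E where "E = F1 ` carrier G1 \<union> F2 ` carrier G2"
  have EB: "E \<subseteq> carrier B" unfolding E_def B_def BijGroup_def using F1_Bij F2_Bij by auto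
  define C where "C = generate B E"
  have subC: "subgroup C B" unfolding C_def by (rule B.generate_is_subgroup[OF EB])
  have cntC: "countable C" unfolding C_def by (rule B.countable_generate[OF EB]) (use cnt in \<open>simp add: E_def\<close>)
  define K' where "K' = B\<lparr>carrier := C\<rparr>"
  have gK': "group K'" unfolding K'_def by (rule B.subgroup_imp_group[OF subC])
  have cK': "carrier K' = C" and mK': "\<And>a b. a \<otimes>\<^bsub>K'\<^esub> b = a \<otimes>\<^bsub>B\<^esub> b" and oK': "\<one>\<^bsub>K'\<^esub> = \<one>\<^bsub>B\<^esub>"
    unfolding K'_def by simp_all
  have CB: "C \<subseteq> Bij WS" using subgroup.subset[OF subC] unfolding B_def BijGroup_def by simp
  have F1C: "F1 x \<in> C" if "x \<in> carrier G1" for x unfolding C_def E_def using that by (auto intro: generate.incl)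
  have F2C: "F2 x \<in> C" if "x \<in> carrier G2" for x unfolding C_def E_def using that by (auto intro: generate.incl)
  have F1K': "F1 \<in> hom G1 K'"
    by (rule homI) (use F1C hom_mult[OF F1_hom] in \<open>auto simp: cK' mK' B_def\<close>)
  have F2K': "F2 \<in> hom G2 K'"
    by (rule homI) (use F2C hom_mult[OF F2_hom] in \<open>auto simp: cK' mK' B_def\<close>)
  obtain K :: "nat monoid" and e d where K: "group K" "e \<in> hom K' K" "\<forall>x\<in>carrier K'. d (e x) = x"
    "\<forall>n\<in>carrier K. d n \<in> carrier K'" "\<forall>a\<in>carrier K. \<forall>b\<in>carrier K. d (a \<otimes>\<^bsub>K\<^esub> b) = d a \<otimes>\<^bsub>K'\<^esub> d b"
    using nat_transport[OF gK'] cntC cK' by metis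
  interpret KK: group K by (rule K(1))
  define f1 where "f1 = (\<lambda>x. e (F1 x))"
  define f2 where "f2 = (\<lambda>x. e (F2 x))"
  have f1h: "f1 \<in> hom G1 K" unfolding f1_def
    by (rule homI) (use hom_in_carrier[OF F1K'] hom_in_carrier[OF K(2)] hom_mult[OF F1K'] hom_mult[OF K(2)] in auto)
  have f2h: "f2 \<in> hom G2 K" unfolding f2_def
    by (rule homI) (use hom_in_carrier[OF F2K'] hom_in_carrier[OF K(2)] hom_mult[OF F2K'] hom_mult[OF K(2)] in auto)
  have fc: "\<forall>h\<in>carrier H. f1 (\<phi>1 h) = f2 (\<phi>2 h)" unfolding f1_def f2_def using F_compat by simp
  obtain f where f: "f \<in> hom G K" "\<forall>x\<in>carrier G1. f (i1 x) = f1 x" "\<forall>x\<in>carrier G2. f (i2 x) = f2 x"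
    using univ K(1) f1h f2h fc by blast
  interpret fh: group_hom G K f by (unfold_locales) (rule f(1))
  define \<Phi> where "\<Phi> = (\<lambda>g. d (f g))"
  have \<Phi>C: "\<Phi> g \<in> C" if "g \<in> carrier G" for g unfolding \<Phi>_def using K(4) that cK' by simp
  have \<Phi>B: "\<Phi> g \<in> Bij WS" if "g \<in> carrier G" for g using \<Phi>C[OF that] CB by auto
  have \<Phi>m: "\<Phi> (g \<otimes>\<^bsub>G\<^esub> g') = compose WS (\<Phi> g) (\<Phi> g')" if "g \<in> carrier G" "g' \<in> carrier G" for g g'
  proof -
    have "\<Phi> (g \<otimes>\<^bsub>G\<^esub> g') = \<Phi> g \<otimes>\<^bsub>K'\<^esub> \<Phi> g'" unfolding \<Phi>_def using that K(5) by simp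
    also have "\<dots> = compose WS (\<Phi> g) (\<Phi> g')" unfolding mK' B_def BijGroup_def using \<Phi>B that by simp
    finally show ?thesis .
  qed
  have "\<forall>g g' w. g \<in> carrier G \<longrightarrow> g' \<in> carrier G \<longrightarrow> w \<in> WS \<longrightarrow> \<Phi> (g \<otimes>\<^bsub>G\<^esub> g') w = \<Phi> g (\<Phi> g' w)"
    using \<Phi>m by (simp add: compose_def)
  moreover have "\<forall>g w. g \<in> carrier G \<longrightarrow> w \<in> WS \<longrightarrow> \<Phi> g w \<in> WS"
    using \<Phi>B Bij_imp_funcset by fast
  moreover have "\<forall>w. w \<in> WS \<longrightarrow> \<Phi> \<one>\<^bsub>G\<^esub> w = w"
  proof -
    have "\<Phi> \<one>\<^bsub>G\<^esub> = d (e \<one>\<^bsub>K'\<^esub>)" unfolding \<Phi>_def using hom_one[OF K(2)] gK' K(1)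
      by (metis fh.hom_one group.is_monoid hom_one)
    also have "\<dots> = \<one>\<^bsub>K'\<^esub>" using K(3) gK' group.is_monoid monoid.one_closed by blast
    finally show ?thesis unfolding oK' B_def BijGroup_def by simp
  qed
  moreover have "\<forall>x w. x \<in> carrier G1 \<longrightarrow> w \<in> WS \<longrightarrow> \<Phi> (i1 x) w = act1 x w"
    unfolding \<Phi>_def using f(2) K(3) F1C cK' unfolding f1_def F1_def by simp
  moreover have "\<forall>x w. x \<in> carrier G2 \<longrightarrow> w \<in> WS \<longrightarrow> \<Phi> (i2 x) w = act2 x w"
    unfolding \<Phi>_def using f(3) K(3) F2C cK' unfolding f2_def F2_def by simp
  ultimately show ?thesis by blast
qed

end


lemma walk_single: "walk adj [u]" unfolding walk_def by simp

lemma walk_Cons: "walk adj (u # xs) \<longleftrightarrow> (xs = [] \<or> (walk adj xs \<and> adj u (hd xs)))"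
proof
  assume w: "walk adj (u # xs)"
  show "xs = [] \<or> (walk adj xs \<and> adj u (hd xs))"
  proof (cases xs)
    case Nil thus ?thesis by simp
  next
    case (Cons y ys)
    have all: "\<forall>i. Suc i < length (u # xs) \<longrightarrow> adj ((u # xs) ! i) ((u # xs) ! Suc i)" using w unfolding walk_def by blast
    have "Suc 0 < length (u # xs) \<longrightarrow> adj ((u # xs) ! 0) ((u # xs) ! Suc 0)" using all by (rule spec)
    hence "adj u (hd xs)" using Cons by simp
    moreover have "walk adj xs" unfolding walk_def
    proof (intro conjI allI impI)
      show "xs \<noteq> []" using Cons by simp
      fix i assume "Suc i < length xs"
      moreover have "Suc (Suc i) < length (u # xs) \<longrightarrow> adj ((u # xs) ! Suc i) ((u # xs) ! Suc (Suc i))" using all by (rule spec)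
      ultimately show "adj (xs ! i) (xs ! Suc i)" by simp
    qed
    ultimately show ?thesis by simp
  qed
next
  assume a: "xs = [] \<or> (walk adj xs \<and> adj u (hd xs))"
  show "walk adj (u # xs)"
  proof (cases xs)
    case Nil thus ?thesis by (simp add: walk_def)
  next
    case (Cons y ys)
    hence wy: "walk adj xs" "adj u y" using a by auto
    show ?thesis unfolding walk_def
    proof (intro conjI allI impI)
      fix i assume i: "Suc i < length (u # xs)"
      show "adj ((u # xs) ! i) ((u # xs) ! Suc i)"
      proof (cases i)
        case 0 thus ?thesis using wy Cons by simp
      next
        case (Suc j) thus ?thesis using wy(1) i unfolding walk_def by simp
      qed
    qed simp
  qed
qed

lemma gdist_le: "walk adj xs \<Longrightarrow> hd xs = u \<Longrightarrow> last xs = v \<Longrightarrow> gdist adj u v \<le> enat (walk_length xs)"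
  unfolding gdist_def by (rule Inf_lower) blast

context group
begin

lemma walk_word:
  assumes S: "S \<subseteq> carrier G"
  shows "u \<in> carrier G \<Longrightarrow> set l \<subseteq> S \<Longrightarrow> \<exists>xs. walk (cayley_adj G S) xs \<and> hd xs = u \<and>
           last xs = u \<otimes> prodl G l \<and> walk_length xs = length l"
proof (induction l arbitrary: u)
  case Nil thus ?case by (intro exI[of _ "[u]"]) (simp add: walk_single walk_length_def)
next
  case (Cons s l)
  have s: "s \<in> S" "s \<in> carrier G" using Cons.prems S by auto
  have us: "u \<otimes> s \<in> carrier G" using s Cons.prems by simp
  obtain xs where xs: "walk (cayley_adj G S) xs" "hd xs = u \<otimes> s" "last xs = (u \<otimes> s) \<otimes> prodl G l"
    "walk_length xs = length l" using Cons.IH[OF us] Cons.prems by auto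
  have ne: "xs \<noteq> []" using xs(1) unfolding walk_def by simp
  have lc: "prodl G l \<in> carrier G" using Cons.prems S by (intro prodl_closed) auto
  have "walk (cayley_adj G S) (u # xs)" unfolding walk_Cons using xs(1,2) s Cons.prems us
    unfolding cayley_adj_def by auto
  moreover have "last (u # xs) = u \<otimes> prodl G (s # l)" using xs(3) ne s Cons.prems lc by (simp add: m_assoc)
  moreover have "walk_length (u # xs) = length (s # l)" using xs(4) ne unfolding walk_length_def by (cases xs) auto
  ultimately show ?case by (intro exI[of _ "u # xs"]) simp
qed

lemma walk_prefix:
  assumes S: "S \<subseteq> carrier G" and w: "walk (cayley_adj G S) xs" and h: "hd xs \<in> carrier G"
  shows "i < length xs \<Longrightarrow> \<exists>l. set l \<subseteq> S \<and> length l = i \<and> xs ! i = hd xs \<otimes> prodl G l"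
proof (induction i)
  case 0
  have "xs ! 0 = hd xs" using 0 by (simp add: hd_conv_nth)
  thus ?case using h by (intro exI[of _ "[]"]) simp
next
  case (Suc i)
  obtain l where l: "set l \<subseteq> S" "length l = i" "xs ! i = hd xs \<otimes> prodl G l" using Suc by auto
  have "cayley_adj G S (xs ! i) (xs ! Suc i)" using w Suc.prems unfolding walk_def by simp
  then obtain s where s: "s \<in> S" "xs ! Suc i = xs ! i \<otimes> s" unfolding cayley_adj_def by auto
  have lc: "prodl G l \<in> carrier G" using l S by (intro prodl_closed) auto
  have sc: "s \<in> carrier G" using s S by auto
  have "xs ! Suc i = hd xs \<otimes> prodl G (l @ [s])" using s(2) l(3) lc sc h l(1) S
    by (simp add: prodl_append m_assoc subset_iff)
  thus ?case using l s by (intro exI[of _ "l @ [s]"]) auto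
qed

lemma walk_in_carrier:
  assumes "walk (cayley_adj G S) xs" "i < length xs" "i > 0"
  shows "xs ! i \<in> carrier G"
proof -
  obtain j where j: "i = Suc j" using assms(3) by (cases i) auto
  have "cayley_adj G S (xs ! j) (xs ! i)" using assms(1,2) j unfolding walk_def by simp
  thus ?thesis unfolding cayley_adj_def by simp
qed

end


definition sL :: "'a \<Rightarrow> 'b \<Rightarrow> nat \<Rightarrow> ('a + 'b) list" where
  "sL a b j = concat (replicate j [Inl a, Inr b]) @ [Inl a]"
definition sR :: "'a \<Rightarrow> 'b \<Rightarrow> nat \<Rightarrow> ('a + 'b) list" where
  "sR a b j = concat (replicate j [Inr b, Inl a]) @ [Inr b]"

lemma sL_0: "sL a b 0 = [Inl a]" by (simp add: sL_def)
lemma sL_Suc: "sL a b (Suc j) = Inl a # Inr b # sL a b j" by (simp add: sL_def)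
lemma sR_0: "sR a b 0 = [Inr b]" by (simp add: sR_def)
lemma sR_Suc: "sR a b (Suc j) = Inr b # Inl a # sR a b j" by (simp add: sR_def)
lemma sL_len: "length (sL a b j) = 2 * j + 1" by (induction j) (simp_all add: sL_0 sL_Suc)
lemma sR_len: "length (sR a b j) = 2 * j + 1" by (induction j) (simp_all add: sR_0 sR_Suc)
lemma sL_hd: "hd (sL a b j) = Inl a" by (cases j) (simp_all add: sL_0 sL_Suc)
lemma sR_hd: "hd (sR a b j) = Inr b" by (cases j) (simp_all add: sR_0 sR_Suc)
lemma sL_ne: "sL a b j \<noteq> []" by (simp add: sL_def)
lemma sR_ne: "sR a b j \<noteq> []" by (simp add: sR_def)

lemma folner_right:
  assumes grp: "group H" and am: "amenable H" and cnt: "countable (carrier H)"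
    and T: "finite T" "T \<subseteq> carrier H"
  shows "\<exists>A. finite A \<and> A \<noteq> {} \<and> A \<subseteq> carrier H \<and>
      card ((\<lambda>(a,t). a \<otimes>\<^bsub>H\<^esub> t) ` (A \<times> T)) \<le> 2 * card A"
proof -
  interpret HH: group H by (rule grp)
  define T' where "T' = m_inv H ` T"
  have T': "finite T'" "T' \<subseteq> carrier H" using T unfolding T'_def by auto
  obtain B where B: "finite B" "B \<noteq> {}" "B \<subseteq> carrier H"
    "card ((\<lambda>(t,b). t \<otimes>\<^bsub>H\<^esub> b) ` (T' \<times> B)) < 2 * card B"
    using folner_left[OF grp am cnt T'] by blast
  define A where "A = m_inv H ` B"
  have injinv: "inj_on (m_inv H) (carrier H)" by (rule inj_onI) (metis HH.inv_inv)
  have cA: "card A = card B" unfolding A_def using card_image[OF inj_on_subset[OF injinv B(3)]] .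
  have e: "(\<lambda>(a,t). a \<otimes>\<^bsub>H\<^esub> t) ` (A \<times> T) = m_inv H ` ((\<lambda>(t,b). t \<otimes>\<^bsub>H\<^esub> b) ` (T' \<times> B))"
  proof
    show "(\<lambda>(a,t). a \<otimes>\<^bsub>H\<^esub> t) ` (A \<times> T) \<subseteq> m_inv H ` ((\<lambda>(t,b). t \<otimes>\<^bsub>H\<^esub> b) ` (T' \<times> B))"
    proof
      fix x assume "x \<in> (\<lambda>(a,t). a \<otimes>\<^bsub>H\<^esub> t) ` (A \<times> T)"
      then obtain b t where bt: "b \<in> B" "t \<in> T" "x = inv\<^bsub>H\<^esub> b \<otimes>\<^bsub>H\<^esub> t" unfolding A_def by auto
      have c: "b \<in> carrier H" "t \<in> carrier H" using bt B(3) T(2) by auto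
      have "x = inv\<^bsub>H\<^esub> (inv\<^bsub>H\<^esub> t \<otimes>\<^bsub>H\<^esub> b)" using bt(3) c by (simp add: HH.inv_mult_group)
      moreover have "inv\<^bsub>H\<^esub> t \<in> T'" using bt unfolding T'_def by auto
      ultimately show "x \<in> m_inv H ` ((\<lambda>(t,b). t \<otimes>\<^bsub>H\<^esub> b) ` (T' \<times> B))" using bt by force
    qed
    show "m_inv H ` ((\<lambda>(t,b). t \<otimes>\<^bsub>H\<^esub> b) ` (T' \<times> B)) \<subseteq> (\<lambda>(a,t). a \<otimes>\<^bsub>H\<^esub> t) ` (A \<times> T)"
    proof
      fix x assume "x \<in> m_inv H ` ((\<lambda>(t,b). t \<otimes>\<^bsub>H\<^esub> b) ` (T' \<times> B))"
      then obtain b t where bt: "b \<in> B" "t \<in> T" "x = inv\<^bsub>H\<^esub> (inv\<^bsub>H\<^esub> t \<otimes>\<^bsub>H\<^esub> b)" unfolding T'_def by auto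
      have c: "b \<in> carrier H" "t \<in> carrier H" using bt B(3) T(2) by auto
      have "x = inv\<^bsub>H\<^esub> b \<otimes>\<^bsub>H\<^esub> t" using bt(3) c by (simp add: HH.inv_mult_group)
      moreover have "inv\<^bsub>H\<^esub> b \<in> A" using bt unfolding A_def by auto
      ultimately show "x \<in> (\<lambda>(a,t). a \<otimes>\<^bsub>H\<^esub> t) ` (A \<times> T)" using bt by force
    qed
  qed
  have "card ((\<lambda>(a,t). a \<otimes>\<^bsub>H\<^esub> t) ` (A \<times> T)) \<le> card ((\<lambda>(t,b). t \<otimes>\<^bsub>H\<^esub> b) ` (T' \<times> B))"
    unfolding e by (rule card_image_le) (use T' B in auto)
  hence "card ((\<lambda>(a,t). a \<otimes>\<^bsub>H\<^esub> t) ` (A \<times> T)) \<le> 2 * card A" using B(4) cA by simp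
  moreover have "finite A" "A \<noteq> {}" "A \<subseteq> carrier H" using B unfolding A_def by auto
  ultimately show ?thesis by blast
qed

context amalgG
begin

lemma walk_cross:
  assumes S: "S \<subseteq> i1 ` carrier G1 \<union> i2 ` carrier G2" and w: "walk (cayley_adj G S) xs"
    and h0: "hd xs \<in> carrier G" "snd (N (hd xs)) \<noteq> []" "isl (hd (snd (N (hd xs))))"
    and l0: "snd (N (last xs)) \<noteq> []" "\<not> isl (hd (snd (N (last xs))))"
  shows "\<exists>x\<in>set xs. snd (N x) = []"
proof (rule ccontr)
  assume "\<not> ?thesis"
  hence ne: "\<And>x. x \<in> set xs \<Longrightarrow> snd (N x) \<noteq> []" by blast
  have xsne: "xs \<noteq> []" using w unfolding walk_def by simp
  have I: "i < length xs \<Longrightarrow> isl (hd (snd (N (xs ! i))))" for i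
  proof (induction i)
    case 0 thus ?case using h0 xsne by (simp add: hd_conv_nth)
  next
    case (Suc i)
    have adj: "cayley_adj G S (xs ! i) (xs ! Suc i)" using w Suc.prems unfolding walk_def by simp
    then obtain s where s: "s \<in> S" "xs ! Suc i = xs ! i \<otimes>\<^bsub>G\<^esub> s" and c: "xs ! i \<in> carrier G"
      unfolding cayley_adj_def by auto
    have n1: "snd (N (xs ! i)) \<noteq> []" using ne Suc.prems by simp
    have n2: "snd (N (xs ! i \<otimes>\<^bsub>G\<^esub> s)) \<noteq> []" using ne[OF nth_mem[OF Suc.prems]] s(2) by simp
    have "isl (hd (snd (N (xs ! i \<otimes>\<^bsub>G\<^esub> s)))) = isl (hd (snd (N (xs ! i))))"
      using side_step[OF c _ n1 n2] s(1) S by blast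
    thus ?case using Suc s by simp
  qed
  have "isl (hd (snd (N (xs ! (length xs - 1)))))" using I xsne by simp
  moreover have "xs ! (length xs - 1) = last xs" using xsne by (simp add: last_conv_nth)
  ultimately show False using l0 by simp
qed

lemma galt_sL: assumes "okg (Inl a)" "okg (Inr b)" shows "galt (sL a b j)"
proof (induction j)
  case 0 show ?case using assms by (simp add: sL_0 galt_Cons galt_def)
next
  case (Suc j) thus ?case using assms by (simp add: sL_Suc galt_Cons sL_hd)
qed

lemma galt_sR: assumes "okg (Inl a)" "okg (Inr b)" shows "galt (sR a b j)"
proof (induction j)
  case 0 show ?case using assms by (simp add: sR_0 galt_Cons galt_def)
next
  case (Suc j) thus ?case using assms by (simp add: sR_Suc galt_Cons sR_hd)
qed

lemma r_cancel_inv: "x \<in> carrier G \<Longrightarrow> w \<in> carrier G \<Longrightarrow> w' \<in> carrier G \<Longrightarrow>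
   (x \<otimes>\<^bsub>G\<^esub> w) \<otimes>\<^bsub>G\<^esub> (inv\<^bsub>G\<^esub> w \<otimes>\<^bsub>G\<^esub> w') = x \<otimes>\<^bsub>G\<^esub> w'"
proof -
  assume c: "x \<in> carrier G" "w \<in> carrier G" "w' \<in> carrier G"
  have "w \<otimes>\<^bsub>G\<^esub> (inv\<^bsub>G\<^esub> w \<otimes>\<^bsub>G\<^esub> w') = w'" using c by (simp add: GG.m_assoc[symmetric])
  thus ?thesis using c by (simp add: GG.m_assoc)
qed

end

context amalgG
begin

lemma main_graph:
  assumes Sf: "finite S" and SG: "S \<subseteq> i1 ` carrier G1 \<union> i2 ` carrier G2"
    and Sinv: "\<forall>s\<in>S. inv\<^bsub>G\<^esub> s \<in> S" and Sgen: "generate G S = carrier G"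
    and am: "amenable H" and cH: "countable (carrier H)"
    and a: "a \<in> carrier G1" "a \<notin> H1" and b: "b \<in> carrier G2" "b \<notin> H2"
  shows "extraterrestrial_graph (carrier G) (cayley_adj G S)"
proof -
  have Sc: "S \<subseteq> carrier G" using SG by auto
  have SS: "S \<union> m_inv G ` S = S" using Sinv by auto
  have words: "\<exists>l. set l \<subseteq> S \<and> g = prodl G l" if "g \<in> carrier G" for g
    using GG.gen_words[OF Sc, of g] that Sgen SS by simp
  have oa: "okg (Inl a)" "okg (Inr b)" using a b by auto
  define w where "w = (\<lambda>j. pw (sL a b j))"
  define w' where "w' = (\<lambda>j. pw (sR a b j))"
  have wc: "w j \<in> carrier G" "w' j \<in> carrier G" for j
    unfolding w_def w'_def using pw_closed galt_lc galt_sL[OF oa] galt_sR[OF oa] by auto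
  have lenU: "length (snd (N (\<iota> h \<otimes>\<^bsub>G\<^esub> w j))) = 2 * j + 1" "isl (hd (snd (N (\<iota> h \<otimes>\<^bsub>G\<^esub> w j))))"
    if "h \<in> carrier H" for h j
  proof -
    have e1: "length (snd (N (\<iota> h \<otimes>\<^bsub>G\<^esub> pw (sL a b j)))) = length (sL a b j)"
      by (rule L1(1)[OF galt_sL[OF oa] that])
    have e2: "isl (hd (snd (N (\<iota> h \<otimes>\<^bsub>G\<^esub> pw (sL a b j))))) = isl (hd (sL a b j))"
      by (rule L1(2)[OF galt_sL[OF oa] that sL_ne])
    show "length (snd (N (\<iota> h \<otimes>\<^bsub>G\<^esub> w j))) = 2 * j + 1" "isl (hd (snd (N (\<iota> h \<otimes>\<^bsub>G\<^esub> w j))))"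
      unfolding w_def using e1 e2 by (simp_all add: sL_len sL_hd)
  qed
  have lenO: "length (snd (N (\<iota> h \<otimes>\<^bsub>G\<^esub> w' j))) = 2 * j + 1" "\<not> isl (hd (snd (N (\<iota> h \<otimes>\<^bsub>G\<^esub> w' j))))"
    if "h \<in> carrier H" for h j
  proof -
    have e1: "length (snd (N (\<iota> h \<otimes>\<^bsub>G\<^esub> pw (sR a b j)))) = length (sR a b j)"
      by (rule L1(1)[OF galt_sR[OF oa] that])
    have e2: "isl (hd (snd (N (\<iota> h \<otimes>\<^bsub>G\<^esub> pw (sR a b j))))) = isl (hd (sR a b j))"
      by (rule L1(2)[OF galt_sR[OF oa] that sR_ne])
    show "length (snd (N (\<iota> h \<otimes>\<^bsub>G\<^esub> w' j))) = 2 * j + 1" "\<not> isl (hd (snd (N (\<iota> h \<otimes>\<^bsub>G\<^esub> w' j))))"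
      unfolding w'_def using e1 e2 by (simp_all add: sR_len sR_hd)
  qed
  have injU: "h = h' \<and> j = j'" if "h \<in> carrier H" "h' \<in> carrier H" "\<iota> h \<otimes>\<^bsub>G\<^esub> w j = \<iota> h' \<otimes>\<^bsub>G\<^esub> w j'" for h h' j j'
  proof -
    have "2 * j + 1 = 2 * j' + 1" using lenU(1)[OF that(1), of j] lenU(1)[OF that(2), of j'] that(3) by simp
    hence jj: "j = j'" by simp
    hence "\<iota> h = \<iota> h'" using that(3) GG.r_cancel[of "w j" "\<iota> h" "\<iota> h'"] wc that by simp
    thus ?thesis using iota_inj that jj by (auto dest: inj_onD)
  qed
  have injO: "h = h' \<and> j = j'" if "h \<in> carrier H" "h' \<in> carrier H" "\<iota> h \<otimes>\<^bsub>G\<^esub> w' j = \<iota> h' \<otimes>\<^bsub>G\<^esub> w' j'" for h h' j j'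
  proof -
    have "2 * j + 1 = 2 * j' + 1" using lenO(1)[OF that(1), of j] lenO(1)[OF that(2), of j'] that(3) by simp
    hence jj: "j = j'" by simp
    hence "\<iota> h = \<iota> h'" using that(3) GG.r_cancel[of "w' j" "\<iota> h" "\<iota> h'"] wc that by simp
    thus ?thesis using iota_inj that jj by (auto dest: inj_onD)
  qed
  show ?thesis unfolding extraterrestrial_graph_def
  proof (intro allI)
    fix m :: nat
    define M where "M = 2 * m + 1"
    define c where "c = (\<lambda>j. inv\<^bsub>G\<^esub> (w j) \<otimes>\<^bsub>G\<^esub> w' j)"
    have cc: "c j \<in> carrier G" for j unfolding c_def using wc by simp
    have "\<forall>j. \<exists>l. set l \<subseteq> S \<and> c j = prodl G l" using words cc by blast
    from choice[OF this] obtain lj where lj': "\<forall>j. set (lj j) \<subseteq> S \<and> c j = prodl G (lj j)" by blast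
    hence lj: "\<And>j. set (lj j) \<subseteq> S" "\<And>j. c j = prodl G (lj j)" by auto
    define k where "k = (\<Sum>j<M. length (lj j))"
    show "\<exists>k. \<forall>r. \<exists>U F Ou \<mu>.
       U \<subseteq> carrier G \<and> F \<subseteq> carrier G \<and> Ou \<subseteq> carrier G \<and> finite U \<and> finite F \<and> finite Ou \<and>
       U \<inter> F = {} \<and> U \<inter> Ou = {} \<and> F \<inter> Ou = {} \<and>
       U \<noteq> {} \<and> card U \<ge> m * card F \<and>
       bij_betw \<mu> U Ou \<and> (\<forall>u\<in>U. gdist (cayley_adj G S) u (\<mu> u) \<le> enat k) \<and>
       (\<forall>xs. walk (cayley_adj G S) xs \<and> hd xs \<in> U \<and> last xs \<in> Ou \<longrightarrow>
              (\<exists>x\<in>set xs. x \<in> F) \<or> walk_length xs \<ge> r)"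
    proof (rule exI[of _ k], rule allI)
      fix r :: nat
      define wb where "wb = prodl G ` {l. set l \<subseteq> S \<and> length l \<le> r}"
      have wbf: "finite wb" unfolding wb_def using finite_lists_length_le[OF Sf] by simp
      define T where "T = {t \<in> carrier H. \<exists>j<M. \<exists>y\<in>wb. \<iota> t = w j \<otimes>\<^bsub>G\<^esub> y}"
      have Tc: "T \<subseteq> carrier H" unfolding T_def by auto
      have "\<iota> ` T \<subseteq> (\<Union>j<M. (\<lambda>y. w j \<otimes>\<^bsub>G\<^esub> y) ` wb)" unfolding T_def by auto
      moreover have "finite (\<Union>j<M. (\<lambda>y. w j \<otimes>\<^bsub>G\<^esub> y) ` wb)" using wbf by simp
      ultimately have "finite (\<iota> ` T)" using finite_subset by blast
      hence Tf: "finite T" using finite_imageD inj_on_subset[OF iota_inj Tc] by blast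
      obtain A where A: "finite A" "A \<noteq> {}" "A \<subseteq> carrier H"
        "card ((\<lambda>(x,t). x \<otimes>\<^bsub>H\<^esub> t) ` (A \<times> T)) \<le> 2 * card A"
        using folner_right[OF HH.is_group am cH Tf Tc] by blast
      define AT where "AT = (\<lambda>(x,t). x \<otimes>\<^bsub>H\<^esub> t) ` (A \<times> T)"
      have ATc: "AT \<subseteq> carrier H" unfolding AT_def using A(3) Tc by auto
      have ATf: "finite AT" unfolding AT_def using A(1) Tf by simp
      define U where "U = (\<lambda>(h,j). \<iota> h \<otimes>\<^bsub>G\<^esub> w j) ` (A \<times> {..<M})"
      define Ou where "Ou = (\<lambda>(h,j). \<iota> h \<otimes>\<^bsub>G\<^esub> w' j) ` (A \<times> {..<M})"
      define F where "F = \<iota> ` AT"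
      define \<mu> where "\<mu> = (\<lambda>x. x \<otimes>\<^bsub>G\<^esub> c (length (snd (N x)) div 2))"
      have AH: "h \<in> carrier H" if "h \<in> A" for h using A(3) that by auto
      have Uc: "U \<subseteq> carrier G" unfolding U_def using AH wc by auto
      have Oc: "Ou \<subseteq> carrier G" unfolding Ou_def using AH wc by auto
      have Fc: "F \<subseteq> carrier G" unfolding F_def using ATc by auto
      have Uf: "finite U" "finite Ou" "finite F" unfolding U_def Ou_def F_def using A(1) ATf by auto
      have FN: "snd (N x) = []" if "x \<in> F" for x using that ATc N_iota unfolding F_def by auto
      have UN: "snd (N x) \<noteq> [] \<and> isl (hd (snd (N x)))" if xU: "x \<in> U" for x
      proof -
        obtain h j where "h \<in> A" "x = \<iota> h \<otimes>\<^bsub>G\<^esub> w j" using xU unfolding U_def by auto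
        moreover have "h \<in> carrier H" using AH calculation(1) .
        ultimately show ?thesis using lenU[of h j] by auto
      qed
      have ON: "snd (N x) \<noteq> [] \<and> \<not> isl (hd (snd (N x)))" if xO: "x \<in> Ou" for x
      proof -
        obtain h j where "h \<in> A" "x = \<iota> h \<otimes>\<^bsub>G\<^esub> w' j" using xO unfolding Ou_def by auto
        moreover have "h \<in> carrier H" using AH calculation(1) .
        ultimately show ?thesis using lenO[of h j] by auto
      qed
      have d1: "U \<inter> F = {}" using UN FN by blast
      have d2: "U \<inter> Ou = {}" using UN ON by blast
      have d3: "F \<inter> Ou = {}" using FN ON by blast
      have Une: "U \<noteq> {}" unfolding U_def M_def using A(2) by auto
      have cardU: "card U = card A * M"
      proof -
        have "inj_on (\<lambda>(h,j). \<iota> h \<otimes>\<^bsub>G\<^esub> w j) (A \<times> {..<M})"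
        proof (rule inj_onI)
          fix p q assume pq: "p \<in> A \<times> {..<M}" "q \<in> A \<times> {..<M}"
            "(\<lambda>(h,j). \<iota> h \<otimes>\<^bsub>G\<^esub> w j) p = (\<lambda>(h,j). \<iota> h \<otimes>\<^bsub>G\<^esub> w j) q"
          obtain h j where p: "p = (h, j)" by (cases p)
          obtain h' j' where q: "q = (h', j')" by (cases q)
          have "h \<in> carrier H" "h' \<in> carrier H" using pq p q AH by auto
          moreover have "\<iota> h \<otimes>\<^bsub>G\<^esub> w j = \<iota> h' \<otimes>\<^bsub>G\<^esub> w j'" using pq(3) p q by simp
          ultimately have "h = h' \<and> j = j'" using injU by blast
          thus "p = q" using p q by simp
        qed
        hence "card U = card (A \<times> {..<M})" unfolding U_def by (rule card_image)
        thus ?thesis by (simp add: card_cartesian_product)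
      qed
      have cardF: "card F \<le> 2 * card A" unfolding F_def using card_image_le[OF ATf, of \<iota>] A(4) AT_def by simp
      have "m * card F \<le> m * (2 * card A)" using cardF by simp
      also have "\<dots> \<le> card U" unfolding cardU M_def by simp
      finally have cardm: "m * card F \<le> card U" .
      have \<mu>U: "\<mu> (\<iota> h \<otimes>\<^bsub>G\<^esub> w j) = \<iota> h \<otimes>\<^bsub>G\<^esub> w' j" if "h \<in> carrier H" for h j
      proof -
        have "length (snd (N (\<iota> h \<otimes>\<^bsub>G\<^esub> w j))) div 2 = j" using lenU(1)[OF that] by simp
        thus ?thesis unfolding \<mu>_def c_def using r_cancel_inv[of "\<iota> h" "w j" "w' j"] that wc by simp
      qed
      have bij: "bij_betw \<mu> U Ou"
      proof (rule bij_betw_imageI)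
        show "inj_on \<mu> U"
        proof (rule inj_onI)
          fix x y assume xy: "x \<in> U" "y \<in> U" "\<mu> x = \<mu> y"
          obtain h j where hj: "h \<in> A" "x = \<iota> h \<otimes>\<^bsub>G\<^esub> w j" using xy(1) unfolding U_def by auto
          obtain h' j' where hj': "h' \<in> A" "y = \<iota> h' \<otimes>\<^bsub>G\<^esub> w j'" using xy(2) unfolding U_def by auto
          have c1: "h \<in> carrier H" "h' \<in> carrier H" using AH hj(1) hj'(1) by auto
          have "\<iota> h \<otimes>\<^bsub>G\<^esub> w' j = \<iota> h' \<otimes>\<^bsub>G\<^esub> w' j'" using xy(3) \<mu>U[OF c1(1)] \<mu>U[OF c1(2)] hj hj' by simp
          hence "h = h' \<and> j = j'" using injO c1 by blast
          thus "x = y" using hj hj' by simp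
        qed
        have "\<mu> ` U = (\<lambda>x. \<mu> (case x of (h, j) \<Rightarrow> \<iota> h \<otimes>\<^bsub>G\<^esub> w j)) ` (A \<times> {..<M})"
          unfolding U_def by (simp add: image_image)
        also have "\<dots> = (\<lambda>(h,j). \<iota> h \<otimes>\<^bsub>G\<^esub> w' j) ` (A \<times> {..<M})"
          by (rule image_cong) (use \<mu>U AH in auto)
        finally show "\<mu> ` U = Ou" unfolding Ou_def .
      qed
      have dist: "gdist (cayley_adj G S) u (\<mu> u) \<le> enat k" if uU: "u \<in> U" for u
      proof -
        obtain h j where hj: "h \<in> A" "j < M" "u = \<iota> h \<otimes>\<^bsub>G\<^esub> w j" using uU unfolding U_def by auto
        have uc: "u \<in> carrier G" using uU Uc by auto
        have "\<mu> u = u \<otimes>\<^bsub>G\<^esub> c j" using \<mu>U[OF AH[OF hj(1)]] hj r_cancel_inv[of "\<iota> h" "w j" "w' j"] AH wc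
          unfolding c_def by simp
        also have "\<dots> = u \<otimes>\<^bsub>G\<^esub> prodl G (lj j)" using lj(2) by simp
        finally have mu: "\<mu> u = u \<otimes>\<^bsub>G\<^esub> prodl G (lj j)" .
        obtain xs where xs: "walk (cayley_adj G S) xs" "hd xs = u" "last xs = u \<otimes>\<^bsub>G\<^esub> prodl G (lj j)"
          "walk_length xs = length (lj j)" using GG.walk_word[OF Sc uc lj(1)] by blast
        have "gdist (cayley_adj G S) u (\<mu> u) \<le> enat (walk_length xs)" using gdist_le[OF xs(1,2)] xs(3) mu by simp
        moreover have "length (lj j) \<le> k" unfolding k_def using hj(2) by (intro member_le_sum) auto
        ultimately show ?thesis using xs(4) by (simp add: order_trans)
      qed
      have block: "(\<exists>x\<in>set xs. x \<in> F) \<or> walk_length xs \<ge> r"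
        if xs: "walk (cayley_adj G S) xs" "hd xs \<in> U" "last xs \<in> Ou" for xs
      proof (cases "walk_length xs \<ge> r")
        case True thus ?thesis by simp
      next
        case False
        obtain h j where hj: "h \<in> A" "j < M" "hd xs = \<iota> h \<otimes>\<^bsub>G\<^esub> w j" using xs(2) unfolding U_def by auto
        have hc: "h \<in> carrier H" using AH hj by simp
        have hdc: "hd xs \<in> carrier G" using xs(2) Uc by auto
        obtain x where x: "x \<in> set xs" "snd (N x) = []"
          using walk_cross[OF SG xs(1) hdc] UN[OF xs(2)] ON[OF xs(3)] by blast
        obtain i where i: "i < length xs" "x = xs ! i" using x(1) by (auto simp: in_set_conv_nth)
        obtain l where l: "set l \<subseteq> S" "length l = i" "xs ! i = hd xs \<otimes>\<^bsub>G\<^esub> prodl G l"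
          using GG.walk_prefix[OF Sc xs(1) hdc i(1)] by blast
        have lc: "prodl G l \<in> carrier G" using l(1) Sc by (intro GG.prodl_closed) auto
        have xc: "x \<in> carrier G" using i l hdc lc by simp
        have "i \<le> walk_length xs" using i(1) unfolding walk_length_def by simp
        hence "length l \<le> r" using False l(2) by simp
        hence ywb: "prodl G l \<in> wb" unfolding wb_def using l(1) by auto
        have hx: "fst (N x) \<in> carrier H" "x = \<iota> (fst (N x))" using N_nil[OF xc x(2)] by auto
        define t where "t = inv\<^bsub>H\<^esub> h \<otimes>\<^bsub>H\<^esub> fst (N x)"
        have tc: "t \<in> carrier H" unfolding t_def using hc hx by simp
        have "\<iota> t = inv\<^bsub>G\<^esub> (\<iota> h) \<otimes>\<^bsub>G\<^esub> x" unfolding t_def using hc hx by (simp add: iota_mult iota_inv)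
        also have "\<dots> = inv\<^bsub>G\<^esub> (\<iota> h) \<otimes>\<^bsub>G\<^esub> ((\<iota> h \<otimes>\<^bsub>G\<^esub> w j) \<otimes>\<^bsub>G\<^esub> prodl G l)" using i l hj by simp
        also have "\<dots> = w j \<otimes>\<^bsub>G\<^esub> prodl G l" using hc wc lc by (simp add: GG.m_assoc[symmetric])
        finally have "\<iota> t = w j \<otimes>\<^bsub>G\<^esub> prodl G l" .
        hence tT: "t \<in> T" unfolding T_def using tc hj(2) ywb by blast
        have "h \<otimes>\<^bsub>H\<^esub> t = fst (N x)" unfolding t_def using hc hx by (simp add: HH.m_assoc[symmetric])
        hence "fst (N x) \<in> AT" unfolding AT_def using hj(1) tT by force
        hence "x \<in> F" unfolding F_def using hx by auto
        thus ?thesis using x(1) by blast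
      qed
      show "\<exists>U F Ou \<mu>.
       U \<subseteq> carrier G \<and> F \<subseteq> carrier G \<and> Ou \<subseteq> carrier G \<and> finite U \<and> finite F \<and> finite Ou \<and>
       U \<inter> F = {} \<and> U \<inter> Ou = {} \<and> F \<inter> Ou = {} \<and>
       U \<noteq> {} \<and> card U \<ge> m * card F \<and>
       bij_betw \<mu> U Ou \<and> (\<forall>u\<in>U. gdist (cayley_adj G S) u (\<mu> u) \<le> enat k) \<and>
       (\<forall>xs. walk (cayley_adj G S) xs \<and> hd xs \<in> U \<and> last xs \<in> Ou \<longrightarrow>
              (\<exists>x\<in>set xs. x \<in> F) \<or> walk_length xs \<ge> r)"
      proof (rule exI[of _ U], rule exI[of _ F], rule exI[of _ Ou], rule exI[of _ \<mu>], intro conjI)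
        show "\<forall>u\<in>U. gdist (cayley_adj G S) u (\<mu> u) \<le> enat k" using dist by blast
        show "\<forall>xs. walk (cayley_adj G S) xs \<and> hd xs \<in> U \<and> last xs \<in> Ou \<longrightarrow>
              (\<exists>x\<in>set xs. x \<in> F) \<or> walk_length xs \<ge> r" using block by blast
      qed (fact Uc Fc Oc Uf d1 d2 d3 Une cardm bij)+
    qed
  qed
qed

end


lemma fg_sym:
  assumes "group K" "finitely_generated K"
  shows "\<exists>S. finite S \<and> S \<subseteq> carrier K \<and> (\<forall>s\<in>S. inv\<^bsub>K\<^esub> s \<in> S) \<and> generate K S = carrier K"
proof -
  interpret K: group K by (rule assms(1))
  obtain S where S: "finite S" "S \<subseteq> carrier K" "generate K S = carrier K"
    using assms(2) unfolding finitely_generated_def by blast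
  define S' where "S' = S \<union> m_inv K ` S"
  have "finite S'" "S' \<subseteq> carrier K" using S unfolding S'_def by auto
  moreover have "\<forall>s\<in>S'. inv\<^bsub>K\<^esub> s \<in> S'" using S(2) unfolding S'_def by auto
  moreover have "generate K S' = carrier K"
  proof
    show "generate K S' \<subseteq> carrier K" by (rule K.generate_incl) (use \<open>S' \<subseteq> carrier K\<close> in simp)
    show "carrier K \<subseteq> generate K S'" using K.mono_generate[of S S'] S(3) unfolding S'_def by auto
  qed
  ultimately show ?thesis by blast
qed

theorem mainTheorem11:
  fixes G1 :: "('a, 'c) monoid_scheme" and G2 :: "('b, 'd) monoid_scheme"
    and H :: "('h, 'e) monoid_scheme" and G :: "('g, 'f) monoid_scheme"
    and \<phi>1 :: "'h \<Rightarrow> 'a" and \<phi>2 :: "'h \<Rightarrow> 'b" and i1 :: "'a \<Rightarrow> 'g" and i2 :: "'b \<Rightarrow> 'g"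
  assumes "group G1" "group G2" "group H"
    and "finitely_generated G1" "finitely_generated G2" "finitely_generated H"
    and "amenable H"
    and "\<phi>1 \<in> hom H G1" "inj_on \<phi>1 (carrier H)" "\<phi>1 ` carrier H \<noteq> carrier G1"
    and "\<phi>2 \<in> hom H G2" "inj_on \<phi>2 (carrier H)" "\<phi>2 ` carrier H \<noteq> carrier G2"
    and "is_amalgamated_product G G1 G2 H \<phi>1 \<phi>2 i1 i2"
  shows "extraterrestrial_group G"
proof -
  note ap = assms(14)[unfolded is_amalgamated_product_def]
  have gG: "group G" using ap by (elim conjE) assumption
  have i1h: "i1 \<in> hom G1 G" using ap by (elim conjE) assumption
  have i2h: "i2 \<in> hom G2 G" using ap by (elim conjE) assumption
  have compat: "\<forall>h\<in>carrier H. i1 (\<phi>1 h) = i2 (\<phi>2 h)" using ap by (elim conjE) assumption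
  have gen: "generate G (i1 ` carrier G1 \<union> i2 ` carrier G2) = carrier G" using ap by (elim conjE) assumption
  have univ: "\<forall>(K :: nat monoid) f1 f2.
        group K \<and> f1 \<in> hom G1 K \<and> f2 \<in> hom G2 K \<and>
        (\<forall>h\<in>carrier H. f1 (\<phi>1 h) = f2 (\<phi>2 h)) \<longrightarrow>
        (\<exists>f \<in> hom G K. (\<forall>x\<in>carrier G1. f (i1 x) = f1 x) \<and> (\<forall>x\<in>carrier G2. f (i2 x) = f2 x))"
    using ap by (elim conjE) assumption
  have amI: "amalg G1 G2 H \<phi>1 \<phi>2"
    by (intro amalg.intro group_hom.intro group_hom_axioms.intro amalg_axioms.intro) (use assms in auto)
  interpret am: amalg G1 G2 H \<phi>1 \<phi>2 by (rule amI)
  have cnt1: "countable (carrier G1)" using fg_countable assms(1,4) by blast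
  have cnt2: "countable (carrier G2)" using fg_countable assms(2,5) by blast
  have cntH: "countable (carrier H)" using fg_countable assms(3,6) by blast
  obtain \<Phi> where P1: "\<forall>g g' w. g \<in> carrier G \<longrightarrow> g' \<in> carrier G \<longrightarrow> w \<in> am.WS \<longrightarrow> \<Phi> (g \<otimes>\<^bsub>G\<^esub> g') w = \<Phi> g (\<Phi> g' w)"
    and P2: "\<forall>g w. g \<in> carrier G \<longrightarrow> w \<in> am.WS \<longrightarrow> \<Phi> g w \<in> am.WS"
    and P3: "\<forall>w. w \<in> am.WS \<longrightarrow> \<Phi> \<one>\<^bsub>G\<^esub> w = w"
    and P4: "\<forall>x w. x \<in> carrier G1 \<longrightarrow> w \<in> am.WS \<longrightarrow> \<Phi> (i1 x) w = am.act1 x w"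
    and P5: "\<forall>x w. x \<in> carrier G2 \<longrightarrow> w \<in> am.WS \<longrightarrow> \<Phi> (i2 x) w = am.act2 x w"
    using am.construct_Phi[OF gG univ cnt1 cnt2] by (elim exE conjE) (rule that)
  have agI: "amalgG G1 G2 H \<phi>1 \<phi>2 G i1 i2 \<Phi>"
  proof (intro amalgG.intro amI group_hom.intro group_hom_axioms.intro amalgG_axioms.intro)
    show "group G" by (rule gG)
    show "group G1" by (rule assms(1))
    show "group G2" by (rule assms(2))
    show "i1 \<in> hom G1 G" by (rule i1h)
    show "i2 \<in> hom G2 G" by (rule i2h)
    show "\<And>h. h \<in> carrier H \<Longrightarrow> i1 (\<phi>1 h) = i2 (\<phi>2 h)" using compat by blast
    show "generate G (i1 ` carrier G1 \<union> i2 ` carrier G2) = carrier G" by (rule gen)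
    show "\<And>g g' w. g \<in> carrier G \<Longrightarrow> g' \<in> carrier G \<Longrightarrow> w \<in> am.WS \<Longrightarrow> \<Phi> (g \<otimes>\<^bsub>G\<^esub> g') w = \<Phi> g (\<Phi> g' w)"
      using P1 by blast
    show "\<And>g w. g \<in> carrier G \<Longrightarrow> w \<in> am.WS \<Longrightarrow> \<Phi> g w \<in> am.WS" using P2 by blast
    show "\<And>w. w \<in> am.WS \<Longrightarrow> \<Phi> \<one>\<^bsub>G\<^esub> w = w" using P3 by blast
    show "\<And>x w. x \<in> carrier G1 \<Longrightarrow> w \<in> am.WS \<Longrightarrow> \<Phi> (i1 x) w = am.act1 x w" using P4 by blast
    show "\<And>x w. x \<in> carrier G2 \<Longrightarrow> w \<in> am.WS \<Longrightarrow> \<Phi> (i2 x) w = am.act2 x w" using P5 by blast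
  qed (rule gG)+
  interpret ag: amalgG G1 G2 H \<phi>1 \<phi>2 G i1 i2 \<Phi> by (rule agI)
  obtain S1 where S1: "finite S1" "S1 \<subseteq> carrier G1" "\<forall>s\<in>S1. inv\<^bsub>G1\<^esub> s \<in> S1" "generate G1 S1 = carrier G1"
    using fg_sym[OF assms(1,4)] by blast
  obtain S2 where S2: "finite S2" "S2 \<subseteq> carrier G2" "\<forall>s\<in>S2. inv\<^bsub>G2\<^esub> s \<in> S2" "generate G2 S2 = carrier G2"
    using fg_sym[OF assms(2,5)] by blast
  define S where "S = i1 ` S1 \<union> i2 ` S2"
  have Sf: "finite S" unfolding S_def using S1 S2 by simp
  have SG: "S \<subseteq> i1 ` carrier G1 \<union> i2 ` carrier G2" unfolding S_def using S1 S2 by auto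
  have Sc: "S \<subseteq> carrier G" using SG by auto
  have Sinv: "\<forall>s\<in>S. inv\<^bsub>G\<^esub> s \<in> S"
  proof
    fix s assume "s \<in> S"
    then consider x where "x \<in> S1" "s = i1 x" | x where "x \<in> S2" "s = i2 x" unfolding S_def by blast
    thus "inv\<^bsub>G\<^esub> s \<in> S"
    proof cases
      case 1
      hence "inv\<^bsub>G\<^esub> s = i1 (inv\<^bsub>G1\<^esub> x)" using S1(2) by (auto simp: ag.I1.hom_inv)
      thus ?thesis using 1 S1(3) unfolding S_def by auto
    next
      case 2
      hence "inv\<^bsub>G\<^esub> s = i2 (inv\<^bsub>G2\<^esub> x)" using S2(2) by (auto simp: ag.I2.hom_inv)
      thus ?thesis using 2 S2(3) unfolding S_def by auto
    qed
  qed
  have Sgen: "generate G S = carrier G"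
  proof
    show "generate G S \<subseteq> carrier G" by (rule ag.GG.generate_incl[OF Sc])
    have sub: "subgroup (generate G S) G" by (rule ag.GG.generate_is_subgroup[OF Sc])
    have "i1 ` carrier G1 = generate G (i1 ` S1)" using ag.I1.generate_img[OF S1(2)] S1(4) by simp
    also have "\<dots> \<subseteq> generate G S" by (rule ag.GG.mono_generate) (auto simp: S_def)
    finally have s1: "i1 ` carrier G1 \<subseteq> generate G S" .
    have "i2 ` carrier G2 = generate G (i2 ` S2)" using ag.I2.generate_img[OF S2(2)] S2(4) by simp
    also have "\<dots> \<subseteq> generate G S" by (rule ag.GG.mono_generate) (auto simp: S_def)
    finally have s2: "i2 ` carrier G2 \<subseteq> generate G S" .
    have "generate G (i1 ` carrier G1 \<union> i2 ` carrier G2) \<subseteq> generate G S"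
      by (rule ag.GG.generate_subgroup_incl[OF _ sub]) (use s1 s2 in auto)
    thus "carrier G \<subseteq> generate G S" using gen by simp
  qed
  obtain a where a: "a \<in> carrier G1" "a \<notin> am.H1"
    using assms(10) hom_in_carrier[OF assms(8)] unfolding am.H1_def by blast
  obtain b where b: "b \<in> carrier G2" "b \<notin> am.H2"
    using assms(13) hom_in_carrier[OF assms(11)] unfolding am.H2_def by blast
  have "extraterrestrial_graph (carrier G) (cayley_adj G S)"
    by (rule ag.main_graph[OF Sf SG Sinv Sgen assms(7) cntH a b])
  thus ?thesis unfolding extraterrestrial_group_def using Sf Sc Sinv Sgen by blast
qed


end
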